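(* Let $A,A^*\in\mathrm{Mat}_{d+1}(\mathbb K)$ be as in the setup below. The following are equivalent: (i) $A,A^*$ is a Leonard pair; (ii) there exist an invertible $G\in\mathrm{Mat}_{d+1}(\mathbb K)$ and nonzero $\phi_1,\ldots,\phi_d\in\mathbb K$ such that $G^{-1}AG$ is the lower bidiagonal matrix with diagonal entries $\theta_d,\theta_{d-1},\ldots,\theta_0$ (i.e. $(i,i)$ entry $\theta_{d-i}$), all subdiagonal entries equal to $1$, and all other entries $0$; and $G^{-1}A^*G$ is the upper bidiagonal matrix with $(i,i)$ entry $\theta^*_i$, $(i-1,i)$ entry $\phi_i$ for $1\le i\le d$, and all other entries $0$. Moreover, if (i),(ii) hold, then $\phi_1,\ldots,\phi_d$ is the split sequence for $A,A^*$ with respect to the orderings $E_d,E_{d-1},\ldots,E_0$ and $E^*_0,E^*_1,\ldots,E^*_d$.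
   Context: Let $\mathbb K$ be a field and $d\ge0$ an integer; rows/columns are indexed $0,\ldots,d$. Let $\theta_0,\ldots,\theta_d\in\mathbb K$ be mutually distinct, $\theta^*_0,\ldots,\theta^*_d\in\mathbb K$ mutually distinct, and $\varphi_1,\ldots,\varphi_d\in\mathbb K$ nonzero. Let $A\in\mathrm{Mat}_{d+1}(\mathbb K)$ be lower bidiagonal with $A_{ii}=\theta_i$, $A_{i+1,i}=1$ and all other entries $0$; let $A^*$ be upper bidiagonal with $A^*_{ii}=\theta^*_i$, $A^*_{i-1,i}=\varphi_i$ and all other entries $0$. For $0\le i\le d$ let $E_i$ (resp. $E^*_i$) be the primitive idempotent of $A$ (resp. $A^*$) for $\theta_i$ (resp. $\theta^*_i$), i.e. $E_i=\prod_{j\ne i}(A-\theta_jI)/(\theta_i-\theta_j)$. A square matrix is tridiagonal if every nonzero entry lies on the diagonal, subdiagonal or superdiagonal, and irreducible tridiagonal if moreover all sub- and superdiagonal entries are nonzero. $A,A^*$ is a Leonard pair if there is a basis of $\mathbb K^{d+1}$ in which $A$ is represented by an irreducible tridiagonal matrix and $A^*$ by a diagonal one, and a basis in which $A^*$ is irreducible tridiagonal and $A$ diagonal. A decomposition of $V=\mathbb K^{d+1}$ is a sequence $V_0,\ldots,V_d$ of 1-dimensional subspaces with $V$ their direct sum. Given orderings $F_0,\ldots,F_d$ of the primitive idempotents of $A$ (with eigenvalues $\eta_i$) and $F^*_0,\ldots,F^*_d$ of those of $A^*$ (eigenvalues $\eta^*_i$), the decomposition is split w.r.t. these orderings if $(A-\eta_iI)V_i=V_{i+1}$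 ($0\le i\le d-1$), $(A-\eta_dI)V_d=0$, $(A^*-\eta^*_iI)V_i=V_{i-1}$ ($1\le i\le d$), $(A^*-\eta^*_0I)V_0=0$. Such a split decomposition is unique if it exists, and for $1\le i\le d$, $V_i$ is an eigenspace of $(A-\eta_{i-1}I)(A^*-\eta^*_iI)$ with nonzero eigenvalue $\psi_i$; the sequence $\psi_1,\ldots,\psi_d$ is called the split sequence for $A,A^*$ with respect to these orderings. *)

theory Defs
  imports "Jordan_Normal_Form.Matrix"
begin

definition lower_bidiag :: "nat \<Rightarrow> (nat \<Rightarrow> 'a::field) \<Rightarrow> 'a mat" where
  "lower_bidiag d th = mat (Suc d) (Suc d)
     (\<lambda>(i,j). if i = j then th i else if i = j + 1 then 1 else 0)"

definition upper_bidiag :: "nat \<Rightarrow> (nat \<Rightarrow> 'a::field) \<Rightarrow> (nat \<Rightarrow> 'a) \<Rightarrow> 'a mat" where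
  "upper_bidiag d ths ph = mat (Suc d) (Suc d)
     (\<lambda>(i,j). if i = j then ths i else if j = i + 1 then ph j else 0)"

definition tridiagonal :: "'a::zero mat \<Rightarrow> bool" where
  "tridiagonal B \<longleftrightarrow> (\<forall>i < dim_row B. \<forall>j < dim_col B. (j > i + 1 \<or> i > j + 1) \<longrightarrow> B $$ (i,j) = 0)"

definition irred_tridiagonal :: "'a::zero mat \<Rightarrow> bool" where
  "irred_tridiagonal B \<longleftrightarrow> tridiagonal B \<and>
     (\<forall>i. i + 1 < dim_row B \<longrightarrow> i + 1 < dim_col B \<longrightarrow> B $$ (i+1,i) \<noteq> 0 \<and> B $$ (i,i+1) \<noteq> 0)"

definition leonard_pair :: "'a::field mat \<Rightarrow> 'a mat \<Rightarrow> bool" where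
  "leonard_pair A As \<longleftrightarrow>
     (\<exists>B Bs P Q. similar_mat_wit A B P Q \<and> similar_mat_wit As Bs P Q \<and>
                 irred_tridiagonal B \<and> diagonal_mat Bs) \<and>
     (\<exists>B Bs P Q. similar_mat_wit A B P Q \<and> similar_mat_wit As Bs P Q \<and>
                 diagonal_mat B \<and> irred_tridiagonal Bs)"

definition decomposition :: "nat \<Rightarrow> (nat \<Rightarrow> 'a::field vec set) \<Rightarrow> bool" where
  "decomposition d V \<longleftrightarrow>
     (\<forall>i \<le> d. \<exists>v. v \<in> carrier_vec (Suc d) \<and> v \<noteq> 0\<^sub>v (Suc d) \<and> V i = {c \<cdot>\<^sub>v v | c. True}) \<and>
     (\<forall>x \<in> carrier_vec (Suc d). \<exists>!u. (\<forall>i \<le> d. u i \<in> V i) \<and> (\<forall>i > d. u i = 0\<^sub>v (Suc d)) \<and>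
        x = vec (Suc d) (\<lambda>k. \<Sum>i\<le>d. u i $ k))"

text \<open>Split decomposition with respect to orderings of the primitive idempotents whose
  eigenvalues are eta 0, ..., eta d (for A) and etas 0, ..., etas d (for As).\<close>
definition split_decomposition ::
  "nat \<Rightarrow> 'a::field mat \<Rightarrow> 'a mat \<Rightarrow> (nat \<Rightarrow> 'a) \<Rightarrow> (nat \<Rightarrow> 'a) \<Rightarrow> (nat \<Rightarrow> 'a vec set) \<Rightarrow> bool" where
  "split_decomposition d A As eta etas V \<longleftrightarrow> decomposition d V \<and>
     (\<forall>i < d. (\<lambda>v. (A - eta i \<cdot>\<^sub>m 1\<^sub>m (Suc d)) *\<^sub>v v) ` V i = V (i+1)) \<and>
     (\<lambda>v. (A - eta d \<cdot>\<^sub>m 1\<^sub>m (Suc d)) *\<^sub>v v) ` V d = {0\<^sub>v (Suc d)} \<and>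
     (\<forall>i \<in> {1..d}. (\<lambda>v. (As - etas i \<cdot>\<^sub>m 1\<^sub>m (Suc d)) *\<^sub>v v) ` V i = V (i-1)) \<and>
     (\<lambda>v. (As - etas 0 \<cdot>\<^sub>m 1\<^sub>m (Suc d)) *\<^sub>v v) ` V 0 = {0\<^sub>v (Suc d)}"

definition split_sequence ::
  "nat \<Rightarrow> 'a::field mat \<Rightarrow> 'a mat \<Rightarrow> (nat \<Rightarrow> 'a) \<Rightarrow> (nat \<Rightarrow> 'a) \<Rightarrow> (nat \<Rightarrow> 'a) \<Rightarrow> bool" where
  "split_sequence d A As eta etas psi \<longleftrightarrow>
     (\<exists>V. split_decomposition d A As eta etas V \<and>
        (\<forall>i \<in> {1..d}. \<forall>v \<in> V i.
           ((A - eta (i-1) \<cdot>\<^sub>m 1\<^sub>m (Suc d)) * (As - etas i \<cdot>\<^sub>m 1\<^sub>m (Suc d))) *\<^sub>v v = psi i \<cdot>\<^sub>v v))"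

end

theory Submission
  imports Defs "Jordan_Normal_Form.Determinant"
begin

lemma inv_ex: assumes A: "A \<in> carrier_mat n n" and d: "det A \<noteq> (0::'a::field)"
  shows "\<exists>B. B \<in> carrier_mat n n \<and> A * B = 1\<^sub>m n \<and> B * A = 1\<^sub>m n"
  using det_non_zero_imp_unit[OF A d, of "()"] unfolding Units_def ring_mat_def by auto

lemma mult_entry: assumes "A \<in> carrier_mat n m" "B \<in> carrier_mat m p" "i < n" "j < p"
  shows "(A * B) $$ (i,j) = (\<Sum>l<m. A $$ (i,l) * B $$ (l,j))"
  using assms by (simp add: scalar_prod_def lessThan_atLeast0 mult.commute)

lemma single_sum: fixes n k :: nat assumes "k < n" "\<forall>l<n. l \<noteq> k \<longrightarrow> f l = 0"
  shows "(\<Sum>l<n. f l) = (f k :: 'a::comm_monoid_add)"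
proof -
  have "(\<Sum>l<n. f l) = (\<Sum>l<n. if l = k then f k else 0)"
    by (rule sum.cong) (use assms in auto)
  then show ?thesis using assms(1) by simp
qed

lemma zero_sum: fixes n :: nat assumes "\<forall>l<n. f l = 0" shows "(\<Sum>l<n. f l) = (0 :: 'a::comm_monoid_add)"
  using assms by simp

lemma lower_bidiag_carrier[simp]: "lower_bidiag d f \<in> carrier_mat (Suc d) (Suc d)"
  by (simp add: lower_bidiag_def)
lemma upper_bidiag_carrier[simp]: "upper_bidiag d f g \<in> carrier_mat (Suc d) (Suc d)"
  by (simp add: upper_bidiag_def)
lemma lower_bidiag_dims[simp]: "dim_row (lower_bidiag d f) = Suc d" "dim_col (lower_bidiag d f) = Suc d"
  by (simp_all add: lower_bidiag_def)
lemma upper_bidiag_dims[simp]: "dim_row (upper_bidiag d f g) = Suc d" "dim_col (upper_bidiag d f g) = Suc d"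
  by (simp_all add: upper_bidiag_def)

lemma lb_left: assumes M: "M \<in> carrier_mat (Suc d) p" and k: "k \<le> d" and j: "j < p"
  shows "(lower_bidiag d f * M) $$ (k,j) = f k * M $$ (k,j) + (if 0 < k then M $$ (k-1,j) else 0)"
proof -
  have "(lower_bidiag d f * M) $$ (k,j) = (\<Sum>l<Suc d. (lower_bidiag d f) $$ (k,l) * M $$ (l,j))"
    using k j by (intro mult_entry[OF _ M]) auto
  also have "\<dots> = (\<Sum>l<Suc d. (if l = k then f k * M $$ (k,j) else 0) +
       (if l = k - 1 then (if 0 < k then M $$ (k-1,j) else 0) else 0))"
    by (rule sum.cong[OF refl]) (use k j in \<open>auto simp: lower_bidiag_def\<close>)
  also have "\<dots> = f k * M $$ (k,j) + (if 0 < k then M $$ (k-1,j) else 0)"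
    using k unfolding sum.distrib by (auto simp del: sum.lessThan_Suc)
  finally show ?thesis .
qed


lemma lb_right: assumes M: "M \<in> carrier_mat p (Suc d)" and k: "k < p" and j: "j \<le> d"
  shows "(M * lower_bidiag d f) $$ (k,j) = M $$ (k,j) * f j + (if j < d then M $$ (k,j+1) else 0)"
proof -
  have "(M * lower_bidiag d f) $$ (k,j) = (\<Sum>l<Suc d. M $$ (k,l) * (lower_bidiag d f) $$ (l,j))"
    using k j by (intro mult_entry[OF M]) auto
  also have "\<dots> = (\<Sum>l<Suc d. (if l = j then M $$ (k,j) * f j else 0) +
       (if l = j + 1 then (if j < d then M $$ (k,j+1) else 0) else 0))"
    by (rule sum.cong[OF refl]) (use k j in \<open>auto simp: lower_bidiag_def\<close>)
  also have "\<dots> = M $$ (k,j) * f j + (if j < d then M $$ (k,j+1) else 0)"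
    using j unfolding sum.distrib by (auto simp del: sum.lessThan_Suc)
  finally show ?thesis .
qed

lemma ub_left: assumes M: "M \<in> carrier_mat (Suc d) p" and k: "k \<le> d" and j: "j < p"
  shows "(upper_bidiag d f g * M) $$ (k,j) = f k * M $$ (k,j) + (if k < d then g (k+1) * M $$ (k+1,j) else 0)"
proof -
  have "(upper_bidiag d f g * M) $$ (k,j) = (\<Sum>l<Suc d. (upper_bidiag d f g) $$ (k,l) * M $$ (l,j))"
    using k j by (intro mult_entry[OF _ M]) auto
  also have "\<dots> = (\<Sum>l<Suc d. (if l = k then f k * M $$ (k,j) else 0) +
       (if l = k + 1 then (if k < d then g (k+1) * M $$ (k+1,j) else 0) else 0))"
    by (rule sum.cong[OF refl]) (use k j in \<open>auto simp: upper_bidiag_def\<close>)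
  also have "\<dots> = f k * M $$ (k,j) + (if k < d then g (k+1) * M $$ (k+1,j) else 0)"
    using k unfolding sum.distrib by (auto simp del: sum.lessThan_Suc)
  finally show ?thesis .
qed

lemma ub_right: assumes M: "M \<in> carrier_mat p (Suc d)" and k: "k < p" and j: "j \<le> d"
  shows "(M * upper_bidiag d f g) $$ (k,j) = M $$ (k,j) * f j + (if 0 < j then M $$ (k,j-1) * g j else 0)"
proof -
  have "(M * upper_bidiag d f g) $$ (k,j) = (\<Sum>l<Suc d. M $$ (k,l) * (upper_bidiag d f g) $$ (l,j))"
    using k j by (intro mult_entry[OF M]) auto
  also have "\<dots> = (\<Sum>l<Suc d. (if l = j then M $$ (k,j) * f j else 0) +
       (if l = j - 1 then (if 0 < j then M $$ (k,j-1) * g j else 0) else 0))"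
    by (rule sum.cong[OF refl]) (use k j in \<open>auto simp: upper_bidiag_def\<close>)
  also have "\<dots> = M $$ (k,j) * f j + (if 0 < j then M $$ (k,j-1) * g j else 0)"
    using j unfolding sum.distrib by (auto simp del: sum.lessThan_Suc)
  finally show ?thesis .
qed

lemma tri_lower: fixes n j :: nat and R :: "nat \<Rightarrow> nat \<Rightarrow> 'a::field" and x y :: "nat \<Rightarrow> 'a"
  assumes eq: "\<forall>k<n. y k = (\<Sum>l<n. R k l * x l)"
    and tri: "\<forall>k<n. \<forall>l<n. k < l \<longrightarrow> R k l = 0" and nz: "\<forall>k<n. R k k \<noteq> (0::'a::field)"
    and y0: "\<forall>k<j. y k = 0"
  shows "\<forall>k<j. k < n \<longrightarrow> x k = 0" and "j < n \<Longrightarrow> y j = R j j * x j"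
proof -
  have key: "y k = R k k * x k" if "k < n" "\<forall>l<k. x l = 0" for k
  proof -
    have "y k = (\<Sum>l<n. R k l * x l)" using eq that by auto
    also have "\<dots> = R k k * x k" by (rule single_sum) (use that in simp, use that tri in \<open>force simp: neq_iff\<close>)
    finally show ?thesis .
  qed
  have "x k = 0" if "k < j" "k < n" for k using that
  proof (induction k rule: less_induct)
    case (less k)
    then have "y k = R k k * x k" using key by auto
    then show ?case using y0 less nz by auto
  qed
  then show "\<forall>k<j. k < n \<longrightarrow> x k = 0" by auto
  then show "j < n \<Longrightarrow> y j = R j j * x j" using key by auto
qed

lemma tri_upper: fixes n j :: nat and R :: "nat \<Rightarrow> nat \<Rightarrow> 'a::field" and x y :: "nat \<Rightarrow> 'a"
  assumes eq: "\<forall>k<n. y k = (\<Sum>l<n. R k l * x l)"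
    and tri: "\<forall>k<n. \<forall>l<n. l < k \<longrightarrow> R k l = 0" and nz: "\<forall>k<n. R k k \<noteq> (0::'a::field)"
    and y0: "\<forall>k<n. j < k \<longrightarrow> y k = 0"
  shows "\<forall>k<n. j < k \<longrightarrow> x k = 0" and "j < n \<Longrightarrow> y j = R j j * x j"
proof -
  have key: "y k = R k k * x k" if "k < n" "\<forall>l<n. k < l \<longrightarrow> x l = 0" for k
  proof -
    have "y k = (\<Sum>l<n. R k l * x l)" using eq that by auto
    also have "\<dots> = R k k * x k" by (rule single_sum) (use that in simp, use that tri in \<open>force simp: neq_iff\<close>)
    finally show ?thesis .
  qed
  have "x k = 0" if "j < k" "k < n" for k using that
  proof (induction "n - k" arbitrary: k rule: less_induct)
    case (less k)
    then have "y k = R k k * x k" using key by auto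
    then show ?case using y0 less nz by auto
  qed
  then show "\<forall>k<n. j < k \<longrightarrow> x k = 0" by auto
  then show "j < n \<Longrightarrow> y j = R j j * x j" using key by auto
qed

lemma mult_nn: "A \<in> carrier_mat n n \<Longrightarrow> B \<in> carrier_mat n n \<Longrightarrow> A * B \<in> carrier_mat n n"
  by auto

lemma det_upper_nz: fixes P :: "'a::field mat"
  assumes P: "P \<in> carrier_mat n n" and tri: "\<forall>i<n. \<forall>j<n. j < i \<longrightarrow> P $$ (i,j) = 0"
    and nz: "\<forall>i<n. P $$ (i,i) \<noteq> 0"
  shows "det P \<noteq> 0"
proof -
  have "upper_triangular P" using P tri unfolding upper_triangular_def by auto
  then have "det P = prod_list (diag_mat P)" using det_upper_triangular P by blast
  moreover have "0 \<notin> set (diag_mat P)" using nz P unfolding diag_mat_def by auto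
  ultimately show ?thesis by (simp add: prod_list_zero_iff)
qed

lemma det_lower_nz: fixes P :: "'a::field mat"
  assumes P: "P \<in> carrier_mat n n" and tri: "\<forall>i<n. \<forall>j<n. i < j \<longrightarrow> P $$ (i,j) = 0"
    and nz: "\<forall>i<n. P $$ (i,i) \<noteq> 0"
  shows "det P \<noteq> 0"
proof -
  have "det (transpose_mat P) \<noteq> 0"
    by (rule det_upper_nz[of _ n]) (use P tri nz in auto)
  then show ?thesis using det_transpose[OF P] by simp
qed

lemma diag_nz_of_det: fixes G :: "'a::field mat"
  assumes G: "G \<in> carrier_mat n n" and dg: "\<forall>i<n. \<forall>j<n. i \<noteq> j \<longrightarrow> G $$ (i,j) = 0"
    and dt: "det G \<noteq> 0"
  shows "\<forall>i<n. G $$ (i,i) \<noteq> 0"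
proof -
  have "upper_triangular G" using G dg unfolding upper_triangular_def by auto
  then have "det G = prod_list (diag_mat G)" using det_upper_triangular G by blast
  then have "0 \<notin> set (diag_mat G)" using dt by (auto simp: prod_list_zero_iff)
  then show ?thesis using G unfolding diag_mat_def by auto
qed

lemma det_inv_nz: fixes P Q :: "'a::field mat"
  assumes "P \<in> carrier_mat n n" "Q \<in> carrier_mat n n" "P * Q = 1\<^sub>m n"
  shows "det P \<noteq> 0" "det Q \<noteq> 0"
  using det_mult[OF assms(1,2)] assms(3) by auto

lemma diag_left: fixes D X :: "'a::field mat"
  assumes D: "D \<in> carrier_mat n n" and X: "X \<in> carrier_mat n m"
    and dg: "\<forall>i<n. \<forall>j<n. i \<noteq> j \<longrightarrow> D $$ (i,j) = 0" and k: "k < n" and j: "j < m"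
  shows "(D * X) $$ (k,j) = D $$ (k,k) * X $$ (k,j)"
proof -
  have "(D * X) $$ (k,j) = (\<Sum>l<n. D $$ (k,l) * X $$ (l,j))" by (rule mult_entry[OF D X k j])
  also have "\<dots> = D $$ (k,k) * X $$ (k,j)" by (rule single_sum) (use k dg in auto)
  finally show ?thesis .
qed

lemma diag_right: fixes D X :: "'a::field mat"
  assumes D: "D \<in> carrier_mat m m" and X: "X \<in> carrier_mat n m"
    and dg: "\<forall>i<m. \<forall>j<m. i \<noteq> j \<longrightarrow> D $$ (i,j) = 0" and k: "k < n" and j: "j < m"
  shows "(X * D) $$ (k,j) = X $$ (k,j) * D $$ (j,j)"
proof -
  have "(X * D) $$ (k,j) = (\<Sum>l<m. X $$ (k,l) * D $$ (l,j))" by (rule mult_entry[OF X D k j])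
  also have "\<dots> = X $$ (k,j) * D $$ (j,j)" by (rule single_sum) (use j dg in auto)
  finally show ?thesis .
qed

lemma form_diag:
  fixes A M S P Q D :: "'a::field mat"
  assumes cA: "A \<in> carrier_mat n n" and cM: "M \<in> carrier_mat n n" and cS: "S \<in> carrier_mat n n"
    and cP: "P \<in> carrier_mat n n" and cQ: "Q \<in> carrier_mat n n" and cD: "D \<in> carrier_mat n n"
    and PQ: "P * Q = 1\<^sub>m n" and QP: "Q * P = 1\<^sub>m n" and AD: "A = P * D * Q"
    and dS: "det S \<noteq> 0" and SA: "S * A = transpose_mat A * S" and SM: "S * M = transpose_mat M * S"
    and Ddiag: "\<forall>i<n. \<forall>j<n. i \<noteq> j \<longrightarrow> D $$ (i,j) = 0"
    and Ddist: "\<forall>i<n. \<forall>j<n. i \<noteq> j \<longrightarrow> D $$ (i,i) \<noteq> D $$ (j,j)"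
  shows "\<exists>\<gamma>. (\<forall>k<n. \<gamma> k \<noteq> 0) \<and> (\<forall>k<n. \<forall>j<n. \<gamma> k * (Q * M * P) $$ (k,j) = \<gamma> j * (Q * M * P) $$ (j,k))"
proof -
  define \<Gamma> where "\<Gamma> = transpose_mat P * S * P"
  have cG: "\<Gamma> \<in> carrier_mat n n" unfolding \<Gamma>_def using cP cS by auto
  have cPT: "transpose_mat P \<in> carrier_mat n n" using cP by auto
  have QAP: "Q * A * P = D"
  proof -
    have "Q * A * P = (Q * P) * D * (Q * P)" unfolding AD using cP cQ cD by (simp add: assoc_mult_mat[of _ n n _ n _ n])
    then show ?thesis using QP cD by simp
  qed
  have PQX: "P * (Q * X) = X" if "X \<in> carrier_mat n n" for X
  proof -
    have "P * (Q * X) = (P * Q) * X" using cP cQ that by simp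
    then show ?thesis using PQ that by simp
  qed
  define Pt where "Pt = transpose_mat P"
  define Qt where "Qt = transpose_mat Q"
  have cPt: "Pt \<in> carrier_mat n n" and cQt: "Qt \<in> carrier_mat n n" unfolding Pt_def Qt_def using cP cQ by auto
  have tPQ: "Qt * (Pt * X) = X" if "X \<in> carrier_mat n n" for X
  proof -
    have "Qt * (Pt * X) = transpose_mat (P * Q) * X"
      unfolding Pt_def Qt_def using cP cQ that by (simp add: transpose_mult[OF cP cQ])
    then show ?thesis using PQ that by simp
  qed
  have key: "\<Gamma> * (Q * N * P) = transpose_mat (Q * N * P) * \<Gamma>"
    if cN: "N \<in> carrier_mat n n" and SN: "S * N = transpose_mat N * S" for N
  proof -
    define Nt where "Nt = transpose_mat N"
    have cNt: "Nt \<in> carrier_mat n n" unfolding Nt_def using cN by auto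
    have tX: "transpose_mat (Q * N * P) = Pt * (Nt * Qt)"
      unfolding Pt_def Qt_def Nt_def using cQ cN cP
      by (simp add: transpose_mult[of _ n n _ n])
    have SNX: "S * (N * X) = Nt * (S * X)" if "X \<in> carrier_mat n n" for X
    proof -
      have "S * (N * X) = (S * N) * X" using cS cN that by simp
      also have "\<dots> = Nt * (S * X)" unfolding SN Nt_def using cS cN that by simp
      finally show ?thesis .
    qed
    have "\<Gamma> * (Q * N * P) = Pt * (S * (N * P))"
      unfolding \<Gamma>_def Pt_def[symmetric] using cPt cP cS cQ cN by (simp add: PQX mult_nn assoc_mult_mat[of _ n n _ n _ n])
    also have "\<dots> = Pt * (Nt * (S * P))" using cP cN cS by (simp add: SNX mult_nn)
    also have "\<dots> = transpose_mat (Q * N * P) * \<Gamma>"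
      unfolding \<Gamma>_def Pt_def[symmetric] tX using cPt cP cS cQt cNt by (simp add: tPQ mult_nn assoc_mult_mat[of _ n n _ n _ n])
    finally show ?thesis .
  qed
  have GD: "\<Gamma> * D = transpose_mat D * \<Gamma>" using key[OF cA SA] QAP by simp
  have Gdiag: "\<forall>i<n. \<forall>j<n. i \<noteq> j \<longrightarrow> \<Gamma> $$ (i,j) = 0"
  proof (intro allI impI)
    fix i j assume ij: "i < n" "j < n" "i \<noteq> j"
    have "(\<Gamma> * D) $$ (i,j) = \<Gamma> $$ (i,j) * D $$ (j,j)" by (rule diag_right[OF cD cG Ddiag ij(1,2)])
    moreover have "(transpose_mat D * \<Gamma>) $$ (i,j) = D $$ (i,i) * \<Gamma> $$ (i,j)"
      using diag_left[of "transpose_mat D" n \<Gamma> n i j] cD cG Ddiag ij by auto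
    ultimately have "\<Gamma> $$ (i,j) * (D $$ (j,j) - D $$ (i,i)) = 0" using GD by (auto simp: algebra_simps)
    then show "\<Gamma> $$ (i,j) = 0" using Ddist ij by auto
  qed
  have "det \<Gamma> = det P * (det S * det P)"
    unfolding \<Gamma>_def using cP cS det_mult[of "transpose_mat P" n "S * P"] det_mult[OF cS cP] det_transpose[OF cP]
    by (simp add: mult_nn)
  then have "det \<Gamma> \<noteq> 0" using det_inv_nz[OF cP cQ PQ] dS by auto
  then have Gnz: "\<forall>i<n. \<Gamma> $$ (i,i) \<noteq> 0" using diag_nz_of_det[OF cG Gdiag] by auto
  define X where "X = Q * M * P"
  have cX: "X \<in> carrier_mat n n" unfolding X_def using cQ cM cP by auto
  have GX: "\<Gamma> * X = transpose_mat X * \<Gamma>" unfolding X_def by (rule key[OF cM SM])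
  show ?thesis
  proof (intro exI[of _ "\<lambda>k. \<Gamma> $$ (k,k)"] conjI allI impI)
    fix k assume "k < n" then show "\<Gamma> $$ (k,k) \<noteq> 0" using Gnz by auto
  next
    fix k j assume kj: "k < n" "j < n"
    have "(\<Gamma> * X) $$ (k,j) = \<Gamma> $$ (k,k) * X $$ (k,j)" by (rule diag_left[OF cG cX Gdiag kj])
    moreover have "(transpose_mat X * \<Gamma>) $$ (k,j) = X $$ (j,k) * \<Gamma> $$ (j,j)"
      using diag_right[of \<Gamma> n "transpose_mat X" n k j] cX cG Gdiag kj by auto
    ultimately show "\<Gamma> $$ (k,k) * (Q * M * P) $$ (k,j) = \<Gamma> $$ (j,j) * (Q * M * P) $$ (j,k)"
      using GX unfolding X_def by (simp add: mult.commute)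
  qed
qed

lemma form_exists:
  fixes A As B Bs P Q :: "'a::field mat"
  assumes cA: "A \<in> carrier_mat n n" and cAs: "As \<in> carrier_mat n n" and cB: "B \<in> carrier_mat n n"
    and cBs: "Bs \<in> carrier_mat n n" and cP: "P \<in> carrier_mat n n" and cQ: "Q \<in> carrier_mat n n"
    and PQ: "P * Q = 1\<^sub>m n" and QP: "Q * P = 1\<^sub>m n" and AB: "A = P * B * Q" and AsBs: "As = P * Bs * Q"
    and Bdiag: "\<forall>i<n. \<forall>j<n. i \<noteq> j \<longrightarrow> B $$ (i,j) = 0" and irr: "irred_tridiagonal Bs"
  shows "\<exists>S. S \<in> carrier_mat n n \<and> det S \<noteq> 0 \<and> S * A = transpose_mat A * S \<and> S * As = transpose_mat As * S"
proof -
  have tri: "\<forall>i<n. \<forall>j<n. (j > i + 1 \<or> i > j + 1) \<longrightarrow> Bs $$ (i,j) = 0"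
    using irr cBs unfolding irred_tridiagonal_def tridiagonal_def by auto
  have nz: "\<forall>i. i + 1 < n \<longrightarrow> Bs $$ (i+1,i) \<noteq> 0 \<and> Bs $$ (i,i+1) \<noteq> 0"
    using irr cBs unfolding irred_tridiagonal_def by auto
  define w where "w = rec_nat (1::'a) (\<lambda>k r. r * Bs $$ (k,k+1) / Bs $$ (k+1,k))"
  have w0: "w 0 = 1" and wS: "w (Suc k) = w k * Bs $$ (k,k+1) / Bs $$ (k+1,k)" for k
    unfolding w_def by simp_all
  have wnz: "w k \<noteq> 0" if "k < n" for k using that
  proof (induction k)
    case 0 then show ?case using w0 by simp
  next
    case (Suc k) then show ?case using wS[of k] nz by auto
  qed
  define W where "W = mat n n (\<lambda>(i,j). if i = j then w i else (0::'a))"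
  have cW: "W \<in> carrier_mat n n" unfolding W_def by simp
  have Wdiag: "\<forall>i<n. \<forall>j<n. i \<noteq> j \<longrightarrow> W $$ (i,j) = 0" unfolding W_def by simp
  have symm: "W * N = transpose_mat N * W"
    if cN: "N \<in> carrier_mat n n" and sy: "\<forall>i<n. \<forall>j<n. w i * N $$ (i,j) = N $$ (j,i) * w j" for N
  proof (rule eq_matI)
    fix i j assume ij: "i < dim_row (transpose_mat N * W)" "j < dim_col (transpose_mat N * W)"
    then have ij': "i < n" "j < n" using cN cW by auto
    have "(W * N) $$ (i,j) = W $$ (i,i) * N $$ (i,j)" by (rule diag_left[OF cW cN Wdiag ij'])
    moreover have "(transpose_mat N * W) $$ (i,j) = N $$ (j,i) * W $$ (j,j)"
      using diag_right[of W n "transpose_mat N" n i j] cN cW Wdiag ij' by auto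
    ultimately show "(W * N) $$ (i,j) = (transpose_mat N * W) $$ (i,j)"
      using sy ij' unfolding W_def by simp
  qed (use cN cW in auto)
  have WB: "W * B = transpose_mat B * W"
  proof (rule symm[OF cB], intro allI impI)
    fix i j assume "i < n" "j < n"
    then show "w i * B $$ (i,j) = B $$ (j,i) * w j" using Bdiag by (cases "i = j") auto
  qed
  have WBs: "W * Bs = transpose_mat Bs * W"
  proof (rule symm[OF cBs], intro allI impI)
    fix i j assume ij: "i < n" "j < n"
    consider "i = j" | "j = i + 1" | "i = j + 1" | "j > i + 1 \<or> i > j + 1" by linarith
    then show "w i * Bs $$ (i,j) = Bs $$ (j,i) * w j"
    proof cases
      case 2 then show ?thesis using wS[of i] nz ij by (auto simp: field_simps)
    next
      case 3 then show ?thesis using wS[of j] nz ij by (auto simp: field_simps)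
    next
      case 4 then show ?thesis using tri ij by auto
    qed simp
  qed
  define Pt where "Pt = transpose_mat P"
  define Qt where "Qt = transpose_mat Q"
  have cPt: "Pt \<in> carrier_mat n n" and cQt: "Qt \<in> carrier_mat n n" unfolding Pt_def Qt_def using cP cQ by auto
  have PtQt: "Pt * (Qt * X) = X" if "X \<in> carrier_mat n n" for X
  proof -
    have "Pt * (Qt * X) = transpose_mat (Q * P) * X"
      unfolding Pt_def Qt_def using cP cQ that by (simp add: transpose_mult[OF cQ cP])
    then show ?thesis using QP that by simp
  qed
  have QPX: "Q * (P * X) = X" if "X \<in> carrier_mat n n" for X
  proof -
    have "Q * (P * X) = (Q * P) * X" using cP cQ that by simp
    then show ?thesis using QP that by simp
  qed
  define S where "S = Qt * W * Q"
  have cS: "S \<in> carrier_mat n n" unfolding S_def using cQt cW cQ by auto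
  have key: "S * (P * N * Q) = transpose_mat (P * N * Q) * S"
    if cN: "N \<in> carrier_mat n n" and WN: "W * N = transpose_mat N * W" for N
  proof -
    define Nt where "Nt = transpose_mat N"
    have cNt: "Nt \<in> carrier_mat n n" unfolding Nt_def using cN by auto
    have tX: "transpose_mat (P * N * Q) = Qt * (Nt * Pt)"
      unfolding Pt_def Qt_def Nt_def using cQ cN cP
      by (simp add: transpose_mult[of _ n n _ n])
    have WNX: "W * (N * X) = Nt * (W * X)" if "X \<in> carrier_mat n n" for X
    proof -
      have "W * (N * X) = (W * N) * X" using cW cN that by simp
      also have "\<dots> = Nt * (W * X)" unfolding WN Nt_def using cW cN that by simp
      finally show ?thesis .
    qed
    have "S * (P * N * Q) = Qt * (W * (N * Q))"
      unfolding S_def using cQt cW cP cQ cN by (simp add: QPX mult_nn assoc_mult_mat[of _ n n _ n _ n])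
    also have "\<dots> = Qt * (Nt * (W * Q))" using cQ cN cW by (simp add: WNX)
    also have "\<dots> = transpose_mat (P * N * Q) * S"
      unfolding S_def tX using cQt cW cQ cNt cPt by (simp add: PtQt mult_nn assoc_mult_mat[of _ n n _ n _ n])
    finally show ?thesis .
  qed
  have "det W \<noteq> 0" by (rule det_upper_nz[OF cW]) (use Wdiag wnz in \<open>auto simp: W_def\<close>)
  moreover have "det S = det Q * (det W * det Q)"
    unfolding S_def Qt_def using cQ cW det_mult[of "transpose_mat Q" n "W * Q"] det_mult[OF cW cQ] det_transpose[OF cQ]
    by (simp add: mult_nn)
  ultimately have "det S \<noteq> 0" using det_inv_nz[OF cP cQ PQ] by auto
  then show ?thesis using cS key[OF cB WB] key[OF cBs WBs] AB AsBs by auto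
qed


lemma cancel_l: fixes P Q Z :: "'a::field mat"
  assumes "P \<in> carrier_mat n n" "Q \<in> carrier_mat n n" "Z \<in> carrier_mat n m" "P * Q = 1\<^sub>m n"
  shows "P * (Q * Z) = Z"
proof -
  have "(P * Q) * Z = P * (Q * Z)" by (rule assoc_mult_mat) (use assms in auto)
  then show ?thesis using assms by simp
qed

lemma sim_unpack: fixes A B P Q :: "'a::field mat"
  assumes "similar_mat_wit A B P Q" "A \<in> carrier_mat n n"
  shows "B \<in> carrier_mat n n" "P \<in> carrier_mat n n" "Q \<in> carrier_mat n n" "P * Q = 1\<^sub>m n" "Q * P = 1\<^sub>m n"
    "A = P * B * Q"
  using assms unfolding similar_mat_wit_def Let_def by auto

lemma sim_intro: fixes A B P Q :: "'a::field mat"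
  assumes "A \<in> carrier_mat n n" "B \<in> carrier_mat n n" "P \<in> carrier_mat n n" "Q \<in> carrier_mat n n"
    "P * Q = 1\<^sub>m n" "Q * P = 1\<^sub>m n" "A = P * B * Q"
  shows "similar_mat_wit A B P Q"
  using assms unfolding similar_mat_wit_def Let_def by auto

lemma sim_left: fixes A B P Q :: "'a::field mat"
  assumes "similar_mat_wit A B P Q" "A \<in> carrier_mat n n"
  shows "Q * A = B * Q" "A * P = P * B"
proof -
  note u = sim_unpack[OF assms]
  have "Q * A = (Q * P) * (B * Q)" unfolding u(6) using u(1-3) by (simp add: assoc_mult_mat[of _ n n _ n _ n] mult_nn)
  then show "Q * A = B * Q" using u by simp
  have "A * P = (P * B) * (Q * P)" unfolding u(6) using u(1-3) by (simp add: assoc_mult_mat[of _ n n _ n _ n] mult_nn)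
  then show "A * P = P * B" using u by simp
qed


lemma lb_eig: fixes f w :: "nat \<Rightarrow> 'a::field"
  assumes eq: "\<forall>m\<le>d. f m * w m + (if 0 < m then w (m-1) else 0) = lam * w m"
    and lam: "lam = f p" and p: "p \<le> d" and dist: "\<forall>i\<le>d. \<forall>j\<le>d. i \<noteq> j \<longrightarrow> f i \<noteq> f j"
  shows "\<forall>m<p. w m = 0" and "w p = 0 \<Longrightarrow> \<forall>m\<le>d. w m = 0"
proof -
  have A: "w m = 0" if "m < p" for m using that
  proof (induction m)
    case 0
    have "f 0 * w 0 = f p * w 0" using eq lam by auto
    then show ?case using dist 0 p by auto
  next
    case (Suc m)
    then have "f (Suc m) * w (Suc m) = f p * w (Suc m)" using eq[rule_format, of "Suc m"] lam p by auto
    then show ?case using dist Suc p by auto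
  qed
  then show "\<forall>m<p. w m = 0" by auto
  assume wp: "w p = 0"
  have "w m = 0" if "m \<le> d" for m using that
  proof (induction m)
    case 0
    then show ?case using A wp by (cases p) auto
  next
    case (Suc m)
    show ?case
    proof (cases "Suc m \<le> p")
      case True then show ?thesis using A wp by (cases "Suc m = p") auto
    next
      case False
      then have "f (Suc m) * w (Suc m) = f p * w (Suc m)" using eq[rule_format, of "Suc m"] lam Suc by auto
      then show ?thesis using dist Suc p False by auto
    qed
  qed
  then show "\<forall>m\<le>d. w m = 0" by auto
qed


lemma shift_col: fixes M G N :: "'a::field mat"
  assumes cM: "M \<in> carrier_mat n n" and cG: "G \<in> carrier_mat n n" and cN: "N \<in> carrier_mat n n"
    and MG: "M * G = G * N" and i: "i < n" and m: "m < n"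
  shows "((M - c \<cdot>\<^sub>m 1\<^sub>m n) *\<^sub>v col G i) $ m = (G * N) $$ (m,i) - c * G $$ (m,i)"
proof -
  have c1: "M - c \<cdot>\<^sub>m 1\<^sub>m n \<in> carrier_mat n n" using cM by auto
  have "(M - c \<cdot>\<^sub>m 1\<^sub>m n) *\<^sub>v col G i = col ((M - c \<cdot>\<^sub>m 1\<^sub>m n) * G) i"
    using col_mult2[OF c1 cG i] by simp
  moreover have "(M - c \<cdot>\<^sub>m 1\<^sub>m n) * G = M * G - c \<cdot>\<^sub>m G"
    using cM cG by (simp add: minus_mult_distrib_mat[of _ n n] mult_smult_assoc_mat[of _ n n])
  ultimately show ?thesis using MG cG cN m i by simp
qed

lemma img1: fixes M :: "'a::field mat"
  assumes M: "M \<in> carrier_mat n n" and g: "g \<in> carrier_vec n" and g': "g' \<in> carrier_vec n"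
    and Mg: "M *\<^sub>v g = a \<cdot>\<^sub>v g'" and a: "a \<noteq> 0"
  shows "(\<lambda>v. M *\<^sub>v v) ` {c \<cdot>\<^sub>v g | c. True} = {c \<cdot>\<^sub>v g' | c. True}"
proof (intro equalityI subsetI)
  fix x :: "'a vec" assume "x \<in> (\<lambda>v. M *\<^sub>v v) ` {c \<cdot>\<^sub>v g | c. True}"
  then obtain c where "x = M *\<^sub>v (c \<cdot>\<^sub>v g)" by auto
  then have "x = (c * a) \<cdot>\<^sub>v g'" using mult_mat_vec[OF M g] Mg by (simp add: smult_smult_assoc)
  then show "x \<in> {c \<cdot>\<^sub>v g' | c. True}" by auto
next
  fix x :: "'a vec" assume "x \<in> {c \<cdot>\<^sub>v g' | c. True}"
  then obtain c where x: "x = c \<cdot>\<^sub>v g'" by auto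
  have "M *\<^sub>v ((c / a) \<cdot>\<^sub>v g) = x" using mult_mat_vec[OF M g] Mg a x by (simp add: smult_smult_assoc)
  then show "x \<in> (\<lambda>v. M *\<^sub>v v) ` {c \<cdot>\<^sub>v g | c. True}" by force
qed

lemma img0: fixes M :: "'a::field mat"
  assumes M: "M \<in> carrier_mat n n" and g: "g \<in> carrier_vec n" and Mg: "M *\<^sub>v g = 0\<^sub>v n"
  shows "(\<lambda>v. M *\<^sub>v v) ` {c \<cdot>\<^sub>v g | c. True} = {0\<^sub>v n}"
proof (intro equalityI subsetI)
  fix x :: "'a vec" assume "x \<in> (\<lambda>v. M *\<^sub>v v) ` {c \<cdot>\<^sub>v g | c. True}"
  then obtain c where "x = M *\<^sub>v (c \<cdot>\<^sub>v g)" by auto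
  then show "x \<in> {0\<^sub>v n}" using mult_mat_vec[OF M g] Mg by auto
next
  fix x :: "'a vec" assume "x \<in> {0\<^sub>v n}"
  then have "x = M *\<^sub>v (0 \<cdot>\<^sub>v g)" using mult_mat_vec[OF M g] Mg by auto
  then show "x \<in> (\<lambda>v. M *\<^sub>v v) ` {c \<cdot>\<^sub>v g | c. True}" by blast
qed

locale lpset =
  fixes d :: nat and th ths ph :: "nat \<Rightarrow> 'a::field"
  assumes th_dist: "\<forall>i \<le> d. \<forall>j \<le> d. i \<noteq> j \<longrightarrow> th i \<noteq> th j"
    and ths_dist: "\<forall>i \<le> d. \<forall>j \<le> d. i \<noteq> j \<longrightarrow> ths i \<noteq> ths j"
    and ph_nz: "\<forall>i \<in> {1..d}. ph i \<noteq> 0"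
begin

abbreviation LA where "LA \<equiv> lower_bidiag d th"
abbreviation LAs where "LAs \<equiv> upper_bidiag d ths ph"

definition Pv :: "'a mat" where
  "Pv = mat (Suc d) (Suc d) (\<lambda>(k,j). if j \<le> k then (\<Prod>m\<in>{Suc j..k}. 1 / (th j - th m)) else 0)"
definition Dth :: "'a mat" where
  "Dth = mat (Suc d) (Suc d) (\<lambda>(i,j). if i = j then th i else 0)"
definition Pu :: "'a mat" where
  "Pu = mat (Suc d) (Suc d) (\<lambda>(k,j). if k \<le> j then (\<Prod>m\<in>{k..<j}. ph (m+1) / (ths j - ths m)) else 0)"
definition Dths :: "'a mat" where
  "Dths = mat (Suc d) (Suc d) (\<lambda>(i,j). if i = j then ths i else 0)"

lemma cPv[simp]: "Pv \<in> carrier_mat (Suc d) (Suc d)" and cPu[simp]: "Pu \<in> carrier_mat (Suc d) (Suc d)"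
  and cDth[simp]: "Dth \<in> carrier_mat (Suc d) (Suc d)" and cDths[simp]: "Dths \<in> carrier_mat (Suc d) (Suc d)"
  by (simp_all add: Pv_def Pu_def Dth_def Dths_def)

lemma Pv_entries: "k \<le> d \<Longrightarrow> j \<le> d \<Longrightarrow> k < j \<Longrightarrow> Pv $$ (k,j) = 0"
  "j \<le> d \<Longrightarrow> Pv $$ (j,j) = 1"
  by (auto simp: Pv_def)

lemma Pu_entries: "k \<le> d \<Longrightarrow> j \<le> d \<Longrightarrow> j < k \<Longrightarrow> Pu $$ (k,j) = 0"
  "j \<le> d \<Longrightarrow> Pu $$ (j,j) = 1"
  by (auto simp: Pu_def)

lemma Dth_diag: "\<forall>i<Suc d. \<forall>j<Suc d. i \<noteq> j \<longrightarrow> Dth $$ (i,j) = 0"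
  and Dths_diag: "\<forall>i<Suc d. \<forall>j<Suc d. i \<noteq> j \<longrightarrow> Dths $$ (i,j) = 0"
  by (auto simp: Dth_def Dths_def)

lemma Pv_eig: "LA * Pv = Pv * Dth"
proof (rule eq_matI)
  fix k j assume "k < dim_row (Pv * Dth)" "j < dim_col (Pv * Dth)"
  then have k: "k \<le> d" and j: "j \<le> d" by (auto simp: Pv_def Dth_def)
  have R: "(Pv * Dth) $$ (k,j) = Pv $$ (k,j) * th j"
    using diag_right[OF cDth cPv Dth_diag, of k j] k j by (simp add: Dth_def)
  have L: "(LA * Pv) $$ (k,j) = th k * Pv $$ (k,j) + (if 0 < k then Pv $$ (k-1,j) else 0)"
    using lb_left[OF cPv k, of j] j by simp
  consider "k < j" | "k = j" | "j < k" by linarith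
  then show "(LA * Pv) $$ (k,j) = (Pv * Dth) $$ (k,j)"
  proof cases
    case 1 then show ?thesis unfolding L R using k j by (auto simp: Pv_def)
  next
    case 2 then show ?thesis unfolding L R using k j by (auto simp: Pv_def)
  next
    case 3
    then obtain k' where k': "k = Suc k'" and jk: "j \<le> k'" by (cases k) auto
    define p where "p = (\<Prod>m\<in>{Suc j..k'}. 1 / (th j - th m))"
    have "Pv $$ (k-1,j) = p" using k' jk k by (simp add: Pv_def p_def)
    moreover have "Pv $$ (k,j) = 1 / (th j - th k) * p"
      using k' jk k j by (simp add: Pv_def p_def prod.nat_ivl_Suc')
    moreover have "th j \<noteq> th k" using th_dist 3 k j by auto
    ultimately show ?thesis unfolding L R using 3 by (auto simp: field_simps)
  qed
qed (auto simp: Pv_def Dth_def)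

lemma Pu_eig: "LAs * Pu = Pu * Dths"
proof (rule eq_matI)
  fix k j assume "k < dim_row (Pu * Dths)" "j < dim_col (Pu * Dths)"
  then have k: "k \<le> d" and j: "j \<le> d" by (auto simp: Pu_def Dths_def)
  have R: "(Pu * Dths) $$ (k,j) = Pu $$ (k,j) * ths j"
    using diag_right[OF cDths cPu Dths_diag, of k j] k j by (simp add: Dths_def)
  have L: "(LAs * Pu) $$ (k,j) = ths k * Pu $$ (k,j) + (if k < d then ph (k+1) * Pu $$ (k+1,j) else 0)"
    using ub_left[OF cPu k, of j] j by simp
  consider "j < k" | "k = j" | "k < j" by linarith
  then show "(LAs * Pu) $$ (k,j) = (Pu * Dths) $$ (k,j)"
  proof cases
    case 1 then show ?thesis unfolding L R using k j by (auto simp: Pu_def)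
  next
    case 2 then show ?thesis unfolding L R using k j by (auto simp: Pu_def)
  next
    case 3
    define p where "p = (\<Prod>m\<in>{Suc k..<j}. ph (m+1) / (ths j - ths m))"
    have "Pu $$ (k+1,j) = p" using 3 k j by (simp add: Pu_def p_def)
    moreover have "Pu $$ (k,j) = ph (k+1) / (ths j - ths k) * p"
      using 3 k j by (simp add: Pu_def p_def prod.atLeast_Suc_lessThan)
    moreover have "ths j \<noteq> ths k" using ths_dist 3 k j by auto
    ultimately show ?thesis unfolding L R using 3 k j by (auto simp: field_simps)
  qed
qed (auto simp: Pu_def Dths_def)

lemma Pv_inv: "\<exists>Q. Q \<in> carrier_mat (Suc d) (Suc d) \<and> Pv * Q = 1\<^sub>m (Suc d) \<and> Q * Pv = 1\<^sub>m (Suc d)"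
  by (rule inv_ex[OF cPv], rule det_lower_nz[OF cPv]) (auto simp: Pv_entries)

lemma Pu_inv: "\<exists>Q. Q \<in> carrier_mat (Suc d) (Suc d) \<and> Pu * Q = 1\<^sub>m (Suc d) \<and> Q * Pu = 1\<^sub>m (Suc d)"
  by (rule inv_ex[OF cPu], rule det_upper_nz[OF cPu]) (auto simp: Pu_entries)

end


context lpset begin

lemmas asc = assoc_mult_mat[of _ "Suc d" "Suc d" _ "Suc d" _ "Suc d"]

definition Qv :: "'a mat" where
  "Qv = (SOME Q. Q \<in> carrier_mat (Suc d) (Suc d) \<and> Pv * Q = 1\<^sub>m (Suc d) \<and> Q * Pv = 1\<^sub>m (Suc d))"

lemma Qv: "Qv \<in> carrier_mat (Suc d) (Suc d)" "Pv * Qv = 1\<^sub>m (Suc d)" "Qv * Pv = 1\<^sub>m (Suc d)"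
  using someI_ex[OF Pv_inv] unfolding Qv_def by auto

lemma cQv[simp]: "Qv \<in> carrier_mat (Suc d) (Suc d)" using Qv by simp

definition Bsv :: "'a mat" where "Bsv = Qv * LAs * Pv"

lemma cBsv[simp]: "Bsv \<in> carrier_mat (Suc d) (Suc d)" unfolding Bsv_def by (auto intro!: mult_nn)

lemma dBsv[simp]: "dim_row Bsv = Suc d" "dim_col Bsv = Suc d" using cBsv carrier_matD by blast+

lemma sim_Dth: "similar_mat_wit LA Dth Pv Qv"
proof (rule sim_intro[of _ "Suc d"])
  have "Pv * Dth * Qv = LA * (Pv * Qv)" using Pv_eig[symmetric] by (simp add: asc)
  then show "LA = Pv * Dth * Qv" using Qv by simp
qed (use Qv in auto)

lemma sim_Bsv: "similar_mat_wit LAs Bsv Pv Qv"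
proof (rule sim_intro[of _ "Suc d"])
  have "Pv * Bsv * Qv = Pv * (Qv * (LAs * (Pv * Qv)))" unfolding Bsv_def by (simp add: asc mult_nn)
  moreover have "Pv * (Qv * LAs) = LAs" by (rule cancel_l[OF cPv cQv upper_bidiag_carrier]) (use Qv in simp)
  ultimately show "LAs = Pv * Bsv * Qv" using Qv by simp
qed (use Qv in auto)

lemma PvBsv: "Pv * Bsv = LAs * Pv" using sim_left(2)[OF sim_Bsv upper_bidiag_carrier] by simp

lemma Bsv_upper: "k \<le> d \<Longrightarrow> j \<le> d \<Longrightarrow> k + 1 < j \<Longrightarrow> Bsv $$ (k,j) = 0"
  "1 \<le> j \<Longrightarrow> j \<le> d \<Longrightarrow> Bsv $$ (j-1,j) = ph j"
proof -
  fix j assume j: "j \<le> d"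
  have eq: "\<forall>k<Suc d. (LAs * Pv) $$ (k,j) = (\<Sum>l<Suc d. Pv $$ (k,l) * Bsv $$ (l,j))"
  proof (intro allI impI)
    fix k assume "k < Suc d"
    then show "(LAs * Pv) $$ (k,j) = (\<Sum>l<Suc d. Pv $$ (k,l) * Bsv $$ (l,j))"
      unfolding PvBsv[symmetric] by (rule mult_entry[OF cPv cBsv]) (use j in auto)
  qed
  have tri: "\<forall>k<Suc d. \<forall>l<Suc d. k < l \<longrightarrow> Pv $$ (k,l) = 0" using Pv_entries by auto
  have nz: "\<forall>k<Suc d. Pv $$ (k,k) \<noteq> 0" using Pv_entries by auto
  have y: "(LAs * Pv) $$ (k,j) = ths k * Pv $$ (k,j) + (if k < d then ph (k+1) * Pv $$ (k+1,j) else 0)"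
    if "k \<le> d" for k using ub_left[OF cPv that, of j] j by simp
  have y0: "\<forall>k<j-1. (LAs * Pv) $$ (k,j) = 0" using y j Pv_entries by auto
  note r = tri_lower[OF eq tri nz y0]
  show "\<And>k. k \<le> d \<Longrightarrow> k + 1 < j \<Longrightarrow> Bsv $$ (k,j) = 0" using r(1) by auto
  show "1 \<le> j \<Longrightarrow> Bsv $$ (j-1,j) = ph j"
  proof -
    assume "1 \<le> j"
    then have "(LAs * Pv) $$ (j-1,j) = Pv $$ (j-1,j-1) * Bsv $$ (j-1,j)" using r(2) j by auto
    moreover have "(LAs * Pv) $$ (j-1,j) = ph j" using y[of "j-1"] j \<open>1 \<le> j\<close> Pv_entries by auto
    ultimately show ?thesis using Pv_entries j by auto
  qed
qed

definition lower_good where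
  "lower_good \<longleftrightarrow> (\<forall>k\<le>d. \<forall>j\<le>d. j + 1 < k \<longrightarrow> Bsv $$ (k,j) = 0) \<and> (\<forall>j<d. Bsv $$ (j+1,j) \<noteq> 0)"

lemma irr_Bsv: assumes "lower_good" shows "irred_tridiagonal Bsv"
  unfolding irred_tridiagonal_def tridiagonal_def
proof (intro conjI allI impI)
  fix i j assume ij: "i < dim_row Bsv" "j < dim_col Bsv" "i + 1 < j \<or> j + 1 < i"
  then show "Bsv $$ (i,j) = 0" using assms Bsv_upper(1)[of i j] unfolding lower_good_def
    by (metis Suc_eq_plus1 dBsv less_Suc_eq_le)
next
  fix i assume i: "i + 1 < dim_row Bsv" "i + 1 < dim_col Bsv"
  then show "Bsv $$ (i+1,i) \<noteq> 0" using assms unfolding lower_good_def by auto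
  show "Bsv $$ (i,i+1) \<noteq> 0" using Bsv_upper(2)[of "i+1"] ph_nz i by auto
qed

lemma lower_good_from_form:
  assumes cS: "S \<in> carrier_mat (Suc d) (Suc d)" and dS: "det S \<noteq> 0"
    and SA: "S * LA = transpose_mat LA * S" and SAs: "S * LAs = transpose_mat LAs * S"
  shows lower_good
proof -
  note u = sim_unpack[OF sim_Dth lower_bidiag_carrier]
  have dist: "\<forall>i<Suc d. \<forall>j<Suc d. i \<noteq> j \<longrightarrow> Dth $$ (i,i) \<noteq> Dth $$ (j,j)"
    using th_dist by (auto simp: Dth_def)
  obtain \<gamma> where g: "\<forall>k<Suc d. \<gamma> k \<noteq> 0" "\<forall>k<Suc d. \<forall>j<Suc d. \<gamma> k * Bsv $$ (k,j) = \<gamma> j * Bsv $$ (j,k)"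
    using form_diag[OF lower_bidiag_carrier upper_bidiag_carrier cS u(2,3,1,4,5,6) dS SA SAs Dth_diag dist]
    unfolding Bsv_def by blast
  show ?thesis unfolding lower_good_def
  proof (intro conjI allI impI)
    fix k j assume kj: "k \<le> d" "j \<le> d" "j + 1 < k"
    then have "Bsv $$ (j,k) = 0" using Bsv_upper(1) by auto
    then show "Bsv $$ (k,j) = 0" using g kj by (metis less_Suc_eq_le mult_eq_0_iff)
  next
    fix j assume j: "j < d"
    have "Bsv $$ (j,j+1) = ph (j+1)" using Bsv_upper(2)[of "j+1"] j by auto
    then have "Bsv $$ (j,j+1) \<noteq> 0" using ph_nz j by auto
    then show "Bsv $$ (j+1,j) \<noteq> 0" using g j
      by (metis Suc_eq_plus1 Suc_less_eq less_Suc_eq mult_eq_0_iff)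
  qed
qed

end


context lpset begin

abbreviation LA' where "LA' \<equiv> lower_bidiag d (\<lambda>i. th (d - i))"

lemma K_props: assumes sG: "similar_mat_wit LA LA' G H"
  shows "\<And>j m. j \<le> d \<Longrightarrow> m < d - j \<Longrightarrow> (H * Pv) $$ (m,j) = 0"
    and "\<And>j. j \<le> d \<Longrightarrow> (H * Pv) $$ (d - j,j) \<noteq> 0"
proof -
  note u = sim_unpack[OF sG lower_bidiag_carrier]
  have HA: "H * LA = LA' * H" using sim_left(1)[OF sG lower_bidiag_carrier] .
  define K where "K = H * Pv"
  have cK: "K \<in> carrier_mat (Suc d) (Suc d)" unfolding K_def using u(1-5) by auto
  have LK: "LA' * K = K * Dth"
  proof -
    have "LA' * K = (LA' * H) * Pv" unfolding K_def using u(1-5) by (simp add: asc)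
    also have "\<dots> = H * (LA * Pv)" unfolding HA[symmetric] using u(1-5) by (simp add: asc)
    also have "\<dots> = K * Dth" unfolding Pv_eig K_def using u(1-5) by (simp add: asc)
    finally show ?thesis .
  qed
  have col: "\<forall>m\<le>d. th (d - m) * K $$ (m,j) + (if 0 < m then K $$ (m-1,j) else 0) = th j * K $$ (m,j)"
    if j: "j \<le> d" for j
  proof (intro allI impI)
    fix m assume m: "m \<le> d"
    have "(LA' * K) $$ (m,j) = th (d - m) * K $$ (m,j) + (if 0 < m then K $$ (m-1,j) else 0)"
      using lb_left[OF cK m, of j] j by simp
    moreover have "(K * Dth) $$ (m,j) = K $$ (m,j) * Dth $$ (j,j)"
      by (rule diag_right[OF cDth cK Dth_diag]) (use m j in auto)
    ultimately show "th (d - m) * K $$ (m,j) + (if 0 < m then K $$ (m-1,j) else 0) = th j * K $$ (m,j)"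
      using LK j by (simp add: Dth_def mult.commute)
  qed
  have dist: "\<forall>i\<le>d. \<forall>j\<le>d. i \<noteq> j \<longrightarrow> th (d - i) \<noteq> th (d - j)" using th_dist by auto
  note E = lb_eig[OF col _ _ dist]
  show "\<And>j m. j \<le> d \<Longrightarrow> m < d - j \<Longrightarrow> (H * Pv) $$ (m,j) = 0"
  proof -
    fix j m assume "j \<le> d" "m < d - j"
    then show "(H * Pv) $$ (m,j) = 0" using E(1)[of j "d - j"] unfolding K_def by auto
  qed
  show "(H * Pv) $$ (d - j,j) \<noteq> 0" if j: "j \<le> d" for j
  proof
    assume "(H * Pv) $$ (d - j,j) = 0"
    then have z: "\<forall>m\<le>d. K $$ (m,j) = 0" using E(2)[of j "d - j"] j unfolding K_def by auto
    have GK: "G * K = Pv" unfolding K_def by (rule cancel_l[of _ "Suc d" _ _ "Suc d"]) (use u(1-5) in auto)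
    have "(G * K) $$ (j,j) = (\<Sum>l<Suc d. G $$ (j,l) * K $$ (l,j))"
      by (rule mult_entry[of _ "Suc d" "Suc d" _ "Suc d"]) (use u(1-5) cK j in auto)
    also have "\<dots> = 0" using z by auto
    finally show False using GK Pv_entries(2)[OF j] by simp
  qed
qed

lemma lower_from_G:
  assumes sG: "similar_mat_wit LA LA' G H" and sU: "similar_mat_wit LAs (upper_bidiag d ths phi) G H"
    and phinz: "\<forall>i\<in>{1..d}. phi i \<noteq> 0"
  shows lower_good
proof -
  note u = sim_unpack[OF sG lower_bidiag_carrier]
  note K = K_props[OF sG]
  have HAs: "H * LAs = upper_bidiag d ths phi * H" using sim_left(1)[OF sU upper_bidiag_carrier] .
  define K where "K = H * Pv"
  have cK: "K \<in> carrier_mat (Suc d) (Suc d)" unfolding K_def using u(1-5) by auto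
  define Y where "Y = H * LAs * Pv"
  have Y1: "Y = upper_bidiag d ths phi * K" unfolding Y_def K_def HAs using u(1-5) by (simp add: asc)
  have Y2: "Y = K * Bsv" unfolding Y_def K_def using u(1-5) by (simp add: asc PvBsv)
  have low: "(\<forall>k<Suc d. j + 1 < k \<longrightarrow> Bsv $$ (k,j) = 0) \<and> (j < d \<longrightarrow> Bsv $$ (j+1,j) \<noteq> 0)"
    if j: "j \<le> d" for j
  proof -
    have eq: "\<forall>k<Suc d. Y $$ (d-k,j) = (\<Sum>l<Suc d. K $$ (d-k,l) * Bsv $$ (l,j))"
    proof (intro allI impI)
      fix k assume "k < Suc d"
      then show "Y $$ (d-k,j) = (\<Sum>l<Suc d. K $$ (d-k,l) * Bsv $$ (l,j))"
        unfolding Y2 by (intro mult_entry[OF cK cBsv]) (use j in auto)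
    qed
    have tri: "\<forall>k<Suc d. \<forall>l<Suc d. l < k \<longrightarrow> K $$ (d-k,l) = 0" using K(1) unfolding K_def by auto
    have nz: "\<forall>k<Suc d. K $$ (d-k,k) \<noteq> 0" using K(2) unfolding K_def by auto
    have Ye: "Y $$ (m,j) = ths m * K $$ (m,j) + (if m < d then phi (m+1) * K $$ (m+1,j) else 0)"
      if "m \<le> d" for m unfolding Y1 using ub_left[OF cK that, of j] j by simp
    have y0: "\<forall>k<Suc d. j + 1 < k \<longrightarrow> Y $$ (d-k,j) = 0"
    proof (intro allI impI)
      fix k assume k: "k < Suc d" "j + 1 < k"
      then have "K $$ (d-k,j) = 0" "K $$ (d-k+1,j) = 0" using K(1)[of j] j unfolding K_def by auto
      then show "Y $$ (d-k,j) = 0" using Ye[of "d-k"] k by auto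
    qed
    note r = tri_upper[OF eq tri nz y0]
    show ?thesis
    proof (intro conjI impI)
      show "\<forall>k<Suc d. j + 1 < k \<longrightarrow> Bsv $$ (k,j) = 0" using r(1) by auto
    next
      assume jd: "j < d"
      have "Y $$ (d-(j+1),j) = K $$ (d-(j+1),j+1) * Bsv $$ (j+1,j)" using r(2) jd by auto
      moreover have "Y $$ (d-(j+1),j) = phi (d-j) * K $$ (d-j,j)"
      proof -
        have "K $$ (d-(j+1),j) = 0" using K(1)[of j] j jd unfolding K_def by auto
        moreover have "d - (j+1) + 1 = d - j" using jd by auto
        ultimately show ?thesis using Ye[of "d-(j+1)"] jd by auto
      qed
      moreover have "phi (d-j) \<noteq> 0" using phinz jd by auto
      moreover have "K $$ (d-j,j) \<noteq> 0" using K(2) j unfolding K_def by auto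
      ultimately show "Bsv $$ (j+1,j) \<noteq> 0" by auto
    qed
  qed
  show ?thesis unfolding lower_good_def using low by auto
qed

end


context lpset begin

definition Qu :: "'a mat" where
  "Qu = (SOME Q. Q \<in> carrier_mat (Suc d) (Suc d) \<and> Pu * Q = 1\<^sub>m (Suc d) \<and> Q * Pu = 1\<^sub>m (Suc d))"

lemma Qu: "Qu \<in> carrier_mat (Suc d) (Suc d)" "Pu * Qu = 1\<^sub>m (Suc d)" "Qu * Pu = 1\<^sub>m (Suc d)"
  using someI_ex[OF Pu_inv] unfolding Qu_def by auto

lemma cQu[simp]: "Qu \<in> carrier_mat (Suc d) (Suc d)" using Qu by simp

definition Bu :: "'a mat" where "Bu = Qu * LA * Pu"

lemma cBu[simp]: "Bu \<in> carrier_mat (Suc d) (Suc d)" unfolding Bu_def by (auto intro!: mult_nn)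

lemma dBu[simp]: "dim_row Bu = Suc d" "dim_col Bu = Suc d" using cBu carrier_matD by blast+

lemma sim_Dths: "similar_mat_wit LAs Dths Pu Qu"
proof (rule sim_intro[of _ "Suc d"])
  have "Pu * Dths * Qu = LAs * (Pu * Qu)" using Pu_eig[symmetric] by (simp add: asc)
  then show "LAs = Pu * Dths * Qu" using Qu by simp
qed (use Qu in auto)

lemma sim_Bu: "similar_mat_wit LA Bu Pu Qu"
proof (rule sim_intro[of _ "Suc d"])
  have "Pu * Bu * Qu = Pu * (Qu * (LA * (Pu * Qu)))" unfolding Bu_def by (simp add: asc mult_nn)
  moreover have "Pu * (Qu * LA) = LA" by (rule cancel_l[OF cPu cQu lower_bidiag_carrier]) (use Qu in simp)
  ultimately show "LA = Pu * Bu * Qu" using Qu by simp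
qed (use Qu in auto)

lemma PuBu: "Pu * Bu = LA * Pu" using sim_left(2)[OF sim_Bu lower_bidiag_carrier] by simp

lemma Bu_lower: "k \<le> d \<Longrightarrow> j \<le> d \<Longrightarrow> j + 1 < k \<Longrightarrow> Bu $$ (k,j) = 0"
  "j \<le> d \<Longrightarrow> j < d \<Longrightarrow> Bu $$ (j+1,j) = 1"
proof -
  fix j assume j: "j \<le> d"
  have eq: "\<forall>k<Suc d. (LA * Pu) $$ (k,j) = (\<Sum>l<Suc d. Pu $$ (k,l) * Bu $$ (l,j))"
  proof (intro allI impI)
    fix k assume "k < Suc d"
    then show "(LA * Pu) $$ (k,j) = (\<Sum>l<Suc d. Pu $$ (k,l) * Bu $$ (l,j))"
      unfolding PuBu[symmetric] by (rule mult_entry[OF cPu cBu]) (use j in auto)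
  qed
  have tri: "\<forall>k<Suc d. \<forall>l<Suc d. l < k \<longrightarrow> Pu $$ (k,l) = 0" using Pu_entries by auto
  have nz: "\<forall>k<Suc d. Pu $$ (k,k) \<noteq> 0" using Pu_entries by auto
  have y: "(LA * Pu) $$ (k,j) = th k * Pu $$ (k,j) + (if 0 < k then Pu $$ (k-1,j) else 0)"
    if "k \<le> d" for k using lb_left[OF cPu that, of j] j by simp
  have y0: "\<forall>k<Suc d. j + 1 < k \<longrightarrow> (LA * Pu) $$ (k,j) = 0" using y j Pu_entries by auto
  note r = tri_upper[OF eq tri nz y0]
  show "\<And>k. k \<le> d \<Longrightarrow> j + 1 < k \<Longrightarrow> Bu $$ (k,j) = 0" using r(1) by auto
  show "j < d \<Longrightarrow> Bu $$ (j+1,j) = 1"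
  proof -
    assume jd: "j < d"
    then have "(LA * Pu) $$ (j+1,j) = Pu $$ (j+1,j+1) * Bu $$ (j+1,j)" using r(2) by auto
    moreover have "(LA * Pu) $$ (j+1,j) = 1" using y[of "j+1"] jd Pu_entries by auto
    ultimately show ?thesis using Pu_entries jd by auto
  qed
qed

lemma LP_from_lower_good: assumes lg: lower_good shows "leonard_pair LA LAs"
proof -
  note irr = irr_Bsv[OF lg]
  note u = sim_unpack[OF sim_Dth lower_bidiag_carrier]
  note ub = sim_unpack[OF sim_Bsv upper_bidiag_carrier]
  obtain S where S: "S \<in> carrier_mat (Suc d) (Suc d)" "det S \<noteq> 0" "S * LA = transpose_mat LA * S"
      "S * LAs = transpose_mat LAs * S"
    using form_exists[OF lower_bidiag_carrier upper_bidiag_carrier cDth cBsv cPv cQv u(4,5,6) ub(6) Dth_diag irr]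
    by blast
  have c2: "\<exists>B Bs P Q. similar_mat_wit LA B P Q \<and> similar_mat_wit LAs Bs P Q \<and> diagonal_mat B \<and> irred_tridiagonal Bs"
    using sim_Dth sim_Bsv irr by (intro exI[of _ Dth] exI[of _ Bsv] exI[of _ Pv] exI[of _ Qv]) (auto simp: diagonal_mat_def Dth_def)
  note v = sim_unpack[OF sim_Dths upper_bidiag_carrier]
  have dist: "\<forall>i<Suc d. \<forall>j<Suc d. i \<noteq> j \<longrightarrow> Dths $$ (i,i) \<noteq> Dths $$ (j,j)"
    using ths_dist by (auto simp: Dths_def)
  obtain \<gamma> where g: "\<forall>k<Suc d. \<gamma> k \<noteq> 0" "\<forall>k<Suc d. \<forall>j<Suc d. \<gamma> k * Bu $$ (k,j) = \<gamma> j * Bu $$ (j,k)"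
    using form_diag[OF upper_bidiag_carrier lower_bidiag_carrier S(1) v(2,3,1,4,5,6) S(2) S(4) S(3) Dths_diag dist]
    unfolding Bu_def by blast
  have irrBu: "irred_tridiagonal Bu"
    unfolding irred_tridiagonal_def tridiagonal_def
  proof (intro conjI allI impI)
    fix i j assume ij: "i < dim_row Bu" "j < dim_col Bu" "i + 1 < j \<or> j + 1 < i"
    then have ij': "i \<le> d" "j \<le> d" by auto
    show "Bu $$ (i,j) = 0"
    proof (cases "j + 1 < i")
      case True then show ?thesis using Bu_lower(1) ij' by auto
    next
      case False
      then have "i + 1 < j" using ij by auto
      then have "Bu $$ (j,i) = 0" using Bu_lower(1) ij' by auto
      then show ?thesis using g ij' by (metis less_Suc_eq_le mult_eq_0_iff)
    qed
  next
    fix i assume i: "i + 1 < dim_row Bu" "i + 1 < dim_col Bu"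
    then show "Bu $$ (i+1,i) \<noteq> 0" using Bu_lower(2)[of i] by auto
    have "\<gamma> i * Bu $$ (i,i+1) = \<gamma> (i+1) * Bu $$ (i+1,i)" using g i by auto
    then show "Bu $$ (i,i+1) \<noteq> 0" using g i Bu_lower(2)[of i] by auto
  qed
  have c1: "\<exists>B Bs P Q. similar_mat_wit LA B P Q \<and> similar_mat_wit LAs Bs P Q \<and> irred_tridiagonal B \<and> diagonal_mat Bs"
    using sim_Bu sim_Dths irrBu by (intro exI[of _ Bu] exI[of _ Dths] exI[of _ Pu] exI[of _ Qu]) (auto simp: diagonal_mat_def Dths_def)
  show ?thesis unfolding leonard_pair_def using c1 c2 by blast
qed

end


context lpset begin

primrec prodA :: "nat \<Rightarrow> 'a mat" where
  "prodA 0 = 1\<^sub>m (Suc d)"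
| "prodA (Suc i) = LA * prodA i - th (d - i) \<cdot>\<^sub>m prodA i"

lemma cprodA[simp]: "prodA i \<in> carrier_mat (Suc d) (Suc d)"
  by (induction i) auto

lemma dprodA[simp]: "dim_row (prodA i) = Suc d" "dim_col (prodA i) = Suc d"
  using cprodA[of i] carrier_matD by blast+

lemma dims[simp]: "dim_row Qv = Suc d" "dim_col Qv = Suc d" "dim_row Pv = Suc d" "dim_col Pv = Suc d"
  "dim_row Qu = Suc d" "dim_col Qu = Suc d" "dim_row Pu = Suc d" "dim_col Pu = Suc d"
  using cQv cPv cQu cPu carrier_matD by blast+

lemma prodA_step: assumes m: "m \<le> d"
  shows "prodA (Suc i) $$ (m,0) = th m * prodA i $$ (m,0) + (if 0 < m then prodA i $$ (m-1,0) else 0)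
           - th (d - i) * prodA i $$ (m,0)"
proof -
  have "prodA (Suc i) $$ (m,0) = (LA * prodA i) $$ (m,0) - th (d - i) * prodA i $$ (m,0)"
    using m cprodA[of i] by simp
  then show ?thesis using lb_left[OF cprodA m, of 0 th i] by simp
qed

lemma prodA_tri: "m \<le> d \<Longrightarrow> i < m \<Longrightarrow> prodA i $$ (m,0) = 0"
  and prodA_diag: "i \<le> d \<Longrightarrow> prodA i $$ (i,0) = 1"
proof -
  have "(\<forall>m\<le>d. i < m \<longrightarrow> prodA i $$ (m,0) = 0) \<and> (i \<le> d \<longrightarrow> prodA i $$ (i,0) = 1)"
  proof (induction i)
    case 0 then show ?case by auto
  next
    case (Suc i)
    show ?case
    proof (intro conjI allI impI)
      fix m assume m: "m \<le> d" "Suc i < m"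
      then show "prodA (Suc i) $$ (m,0) = 0" using prodA_step[OF m(1), of i] Suc.IH by auto
    next
      assume i: "Suc i \<le> d"
      then show "prodA (Suc i) $$ (Suc i,0) = 1" using prodA_step[OF i] Suc.IH by auto
    qed
  qed
  then show "m \<le> d \<Longrightarrow> i < m \<Longrightarrow> prodA i $$ (m,0) = 0" and "i \<le> d \<Longrightarrow> prodA i $$ (i,0) = 1" by auto
qed

definition eta :: "nat \<Rightarrow> nat \<Rightarrow> 'a" where "eta i a = (\<Prod>k<i. th a - th (d - k))"

lemma Qv_prodA: "a \<le> d \<Longrightarrow> (Qv * prodA i) $$ (a,0) = eta i a * Qv $$ (a,0)"
proof (induction i arbitrary: a)
  case 0 then show ?case by (simp add: eta_def)
next
  case (Suc i)
  have QA: "Qv * LA = Dth * Qv" using sim_left(1)[OF sim_Dth lower_bidiag_carrier] .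
  have "Qv * prodA (Suc i) = Qv * (LA * prodA i) - Qv * (th (d - i) \<cdot>\<^sub>m prodA i)"
    by (simp add: mult_minus_distrib_mat[of _ "Suc d" "Suc d" _ "Suc d"] mult_nn)
  also have "\<dots> = Dth * (Qv * prodA i) - th (d - i) \<cdot>\<^sub>m (Qv * prodA i)"
  proof -
    have "Qv * (LA * prodA i) = (Qv * LA) * prodA i" by (rule assoc_mult_mat[symmetric]) auto
    also have "\<dots> = Dth * (Qv * prodA i)" unfolding QA by (rule assoc_mult_mat[OF cDth cQv cprodA])
    finally show ?thesis by (simp add: mult_smult_distrib[of _ "Suc d" "Suc d" _ "Suc d"])
  qed
  finally have e: "Qv * prodA (Suc i) = Dth * (Qv * prodA i) - th (d - i) \<cdot>\<^sub>m (Qv * prodA i)" .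
  have "(Dth * (Qv * prodA i)) $$ (a,0) = Dth $$ (a,a) * (Qv * prodA i) $$ (a,0)"
    by (rule diag_left[OF cDth _ Dth_diag]) (use Suc.prems in \<open>auto intro: mult_nn\<close>)
  then have "(Qv * prodA (Suc i)) $$ (a,0) = (th a - th (d - i)) * (Qv * prodA i) $$ (a,0)"
    unfolding e using Suc.prems by (simp add: Dth_def algebra_simps mult_nn)
  then show ?case using Suc.IH[OF Suc.prems] by (simp add: eta_def algebra_simps)
qed

lemma eta_zero: "a \<le> d \<Longrightarrow> d - a < i \<Longrightarrow> eta i a = 0"
  unfolding eta_def by (rule prod_zero) (auto intro!: bexI[of _ "d - a"])

lemma prodA_last: "m \<le> d \<Longrightarrow> prodA (Suc d) $$ (m,0) = 0"
proof -
  assume m: "m \<le> d"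
  have z: "(Qv * prodA (Suc d)) $$ (l,0) = 0" if "l < Suc d" for l
    using Qv_prodA[of l "Suc d"] eta_zero[of l "Suc d"] that by auto
  have "Pv * (Qv * prodA (Suc d)) = prodA (Suc d)" by (rule cancel_l[OF cPv cQv cprodA Qv(2)])
  then have "prodA (Suc d) $$ (m,0) = (\<Sum>l<Suc d. Pv $$ (m,l) * (Qv * prodA (Suc d)) $$ (l,0))"
    using mult_entry[OF cPv _ _, of "Qv * prodA (Suc d)" "Suc d" m 0] m by (simp add: mult_nn del: prodA.simps)
  also have "\<dots> = 0" using z by simp
  finally show ?thesis .
qed

definition Gm :: "'a mat" where "Gm = mat (Suc d) (Suc d) (\<lambda>(m,i). prodA i $$ (m,0))"

lemma cGm[simp]: "Gm \<in> carrier_mat (Suc d) (Suc d)" unfolding Gm_def by simp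

lemma dGm[simp]: "dim_row Gm = Suc d" "dim_col Gm = Suc d" unfolding Gm_def by simp_all

lemma Gm_col: assumes M: "M \<in> carrier_mat (Suc d) (Suc d)" and m: "m \<le> d" and i: "i \<le> d"
  shows "(M * Gm) $$ (m,i) = (M * prodA i) $$ (m,0)"
proof -
  have "(M * Gm) $$ (m,i) = (\<Sum>l<Suc d. M $$ (m,l) * Gm $$ (l,i))" by (rule mult_entry[OF M cGm]) (use m i in auto)
  also have "\<dots> = (\<Sum>l<Suc d. M $$ (m,l) * prodA i $$ (l,0))" using i by (auto simp: Gm_def)
  also have "\<dots> = (M * prodA i) $$ (m,0)" by (rule mult_entry[OF M cprodA, symmetric]) (use m in auto)
  finally show ?thesis .
qed

definition Hm :: "'a mat" where
  "Hm = (SOME H. H \<in> carrier_mat (Suc d) (Suc d) \<and> Gm * H = 1\<^sub>m (Suc d) \<and> H * Gm = 1\<^sub>m (Suc d))"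

lemma Hm: "Hm \<in> carrier_mat (Suc d) (Suc d)" "Gm * Hm = 1\<^sub>m (Suc d)" "Hm * Gm = 1\<^sub>m (Suc d)"
proof -
  have "det Gm \<noteq> 0" by (rule det_upper_nz[OF cGm]) (auto simp: Gm_def prodA_tri prodA_diag)
  from inv_ex[OF cGm this] show "Hm \<in> carrier_mat (Suc d) (Suc d)" "Gm * Hm = 1\<^sub>m (Suc d)" "Hm * Gm = 1\<^sub>m (Suc d)"
    using someI_ex unfolding Hm_def by (metis (mono_tags, lifting))+
qed

lemma cHm[simp]: "Hm \<in> carrier_mat (Suc d) (Suc d)" using Hm by simp

lemma AG: "LA * Gm = Gm * LA'"
proof (rule eq_matI)
  fix m i assume "m < dim_row (Gm * LA')" "i < dim_col (Gm * LA')"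
  then have m: "m \<le> d" and i: "i \<le> d" by auto
  have "(LA * Gm) $$ (m,i) = prodA (Suc i) $$ (m,0) + th (d - i) * prodA i $$ (m,0)"
    using Gm_col[OF lower_bidiag_carrier m i] prodA_step[OF m, of i] lb_left[OF cprodA m, of 0 th i] by simp
  moreover have "(Gm * LA') $$ (m,i) = Gm $$ (m,i) * th (d - i) + (if i < d then Gm $$ (m,i+1) else 0)"
    using lb_right[OF cGm _ i, of m] m by simp
  ultimately show "(LA * Gm) $$ (m,i) = (Gm * LA') $$ (m,i)"
    using m i prodA_last[OF m] by (cases "i < d") (auto simp: Gm_def algebra_simps)
qed auto

lemma sim_G: "similar_mat_wit LA LA' Gm Hm"
proof (rule sim_intro[of _ "Suc d"])
  have "Gm * LA' * Hm = LA * (Gm * Hm)" using AG[symmetric] by (simp add: asc)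
  then show "LA = Gm * LA' * Hm" using Hm by simp
qed (use Hm in auto)

lemma QvG: "a \<le> d \<Longrightarrow> i \<le> d \<Longrightarrow> d - i < a \<Longrightarrow> (Qv * Gm) $$ (a,i) = 0"
  using Gm_col[OF cQv, of a i] Qv_prodA[of a i] eta_zero[of a i] by auto

definition Um :: "'a mat" where "Um = Hm * LAs * Gm"
definition phiG :: "nat \<Rightarrow> 'a" where "phiG i = Um $$ (i-1,i)"

lemma cUm[simp]: "Um \<in> carrier_mat (Suc d) (Suc d)" unfolding Um_def by (auto intro!: mult_nn)

lemma dUm[simp]: "dim_row Um = Suc d" "dim_col Um = Suc d" using cUm carrier_matD by blast+

lemma Um_upper: "k \<le> d \<Longrightarrow> i \<le> d \<Longrightarrow> i < k \<Longrightarrow> Um $$ (k,i) = 0"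
  "i \<le> d \<Longrightarrow> Um $$ (i,i) = ths i"
proof -
  fix i assume i: "i \<le> d"
  have GU: "Gm * Um = LAs * Gm" unfolding Um_def
    by (simp add: asc mult_nn cancel_l[OF cGm cHm mult_nn[OF upper_bidiag_carrier cGm] Hm(2)])
  have eq: "\<forall>k<Suc d. (LAs * Gm) $$ (k,i) = (\<Sum>l<Suc d. Gm $$ (k,l) * Um $$ (l,i))"
  proof (intro allI impI)
    fix k assume "k < Suc d"
    then show "(LAs * Gm) $$ (k,i) = (\<Sum>l<Suc d. Gm $$ (k,l) * Um $$ (l,i))"
      unfolding GU[symmetric] by (rule mult_entry[OF cGm cUm]) (use i in auto)
  qed
  have tri: "\<forall>k<Suc d. \<forall>l<Suc d. l < k \<longrightarrow> Gm $$ (k,l) = 0" by (auto simp: Gm_def prodA_tri)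
  have nz: "\<forall>k<Suc d. Gm $$ (k,k) \<noteq> 0" by (auto simp: Gm_def prodA_diag)
  have y: "(LAs * Gm) $$ (k,i) = ths k * Gm $$ (k,i) + (if k < d then ph (k+1) * Gm $$ (k+1,i) else 0)"
    if "k \<le> d" for k using ub_left[OF cGm that, of i] i by simp
  have y0: "\<forall>k<Suc d. i < k \<longrightarrow> (LAs * Gm) $$ (k,i) = 0" using y i by (auto simp: Gm_def prodA_tri)
  note r = tri_upper[OF eq tri nz y0]
  show "\<And>k. k \<le> d \<Longrightarrow> i < k \<Longrightarrow> Um $$ (k,i) = 0" using r(1) by auto
  have "(LAs * Gm) $$ (i,i) = Um $$ (i,i)" using r(2) i nz by (auto simp: Gm_def prodA_diag)
  moreover have "(LAs * Gm) $$ (i,i) = ths i" using y[OF i] i by (auto simp: Gm_def prodA_diag prodA_tri)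
  ultimately show "Um $$ (i,i) = ths i" by simp
qed

end


context lpset begin

lemma PvQv_c: "X \<in> carrier_mat (Suc d) (Suc d) \<Longrightarrow> Pv * (Qv * X) = X"
  by (rule cancel_l[OF cPv cQv _ Qv(2)])
lemma GmHm_c: "X \<in> carrier_mat (Suc d) (Suc d) \<Longrightarrow> Gm * (Hm * X) = X"
  by (rule cancel_l[OF cGm cHm _ Hm(2)])

lemma Um_lower: assumes lg: lower_good
  shows "k \<le> d \<Longrightarrow> i \<le> d \<Longrightarrow> k + 1 < i \<Longrightarrow> Um $$ (k,i) = 0"
proof -
  assume k: "k \<le> d" and i: "i \<le> d" and ki: "k + 1 < i"
  note K = K_props[OF sim_G]
  define K where "K = Hm * Pv"
  define Z where "Z = Bsv * (Qv * Gm)"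
  have cK: "K \<in> carrier_mat (Suc d) (Suc d)" and cZ: "Z \<in> carrier_mat (Suc d) (Suc d)"
    unfolding K_def Z_def by (auto intro!: mult_nn)
  have UKZ: "Um = K * Z" unfolding Um_def K_def Z_def Bsv_def
    by (simp add: asc mult_nn PvQv_c)
  have Z0: "Z $$ (a,i) = 0" if a: "a \<le> d" "d - i + 1 < a" for a
  proof -
    have "Z $$ (a,i) = (\<Sum>l<Suc d. Bsv $$ (a,l) * (Qv * Gm) $$ (l,i))"
      unfolding Z_def by (rule mult_entry[OF cBsv]) (use a i in \<open>auto intro: mult_nn\<close>)
    also have "\<dots> = 0"
    proof (rule zero_sum, intro allI impI)
      fix l assume l: "l < Suc d"
      show "Bsv $$ (a,l) * (Qv * Gm) $$ (l,i) = 0"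
      proof (cases "d - i < l")
        case True then show ?thesis using QvG[of l i] l i by auto
      next
        case False then have "l + 1 < a" using a i by auto
        then show ?thesis using lg l a unfolding lower_good_def by auto
      qed
    qed
    finally show ?thesis .
  qed
  have "Um $$ (k,i) = (\<Sum>a<Suc d. K $$ (k,a) * Z $$ (a,i))"
    unfolding UKZ by (rule mult_entry[OF cK cZ]) (use k i in auto)
  also have "\<dots> = 0"
  proof (rule zero_sum, intro allI impI)
    fix a assume a: "a < Suc d"
    show "K $$ (k,a) * Z $$ (a,i) = 0"
    proof (cases "d - i + 1 < a")
      case True then show ?thesis using Z0 a by auto
    next
      case False then have "k < d - a" using ki i a by auto
      then show ?thesis using K(1)[of a k] a unfolding K_def by auto
    qed
  qed
  finally show "Um $$ (k,i) = 0" .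
qed

lemma Um_eq: assumes lg: lower_good shows "Um = upper_bidiag d ths phiG"
proof (rule eq_matI)
  fix k i assume "k < dim_row (upper_bidiag d ths phiG)" "i < dim_col (upper_bidiag d ths phiG)"
  then have k: "k \<le> d" and i: "i \<le> d" by auto
  consider "k = i" | "i = k + 1" | "i < k" | "k + 1 < i" by linarith
  then show "Um $$ (k,i) = upper_bidiag d ths phiG $$ (k,i)"
  proof cases
    case 1 then show ?thesis using Um_upper(2)[OF i] k by (auto simp: upper_bidiag_def)
  next
    case 2 then show ?thesis using k i by (auto simp: upper_bidiag_def phiG_def)
  next
    case 3 then show ?thesis using Um_upper(1)[OF k i] k i by (auto simp: upper_bidiag_def)
  next
    case 4 then show ?thesis using Um_lower[OF lg k i] k i by (auto simp: upper_bidiag_def)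
  qed
qed (simp_all add: dUm)

lemma phiG_nz: assumes lg: lower_good shows "\<forall>i\<in>{1..d}. phiG i \<noteq> 0"
proof (rule ballI, rule notI)
  fix i assume i: "i \<in> {1..d}" and z: "phiG i = 0"
  note K = K_props[OF sim_G]
  define K where "K = Hm * Pv"
  define T where "T = Um * K"
  have cK: "K \<in> carrier_mat (Suc d) (Suc d)" and cT: "T \<in> carrier_mat (Suc d) (Suc d)"
    unfolding K_def T_def by (auto intro!: mult_nn)
  have BT: "Bsv = (Qv * Gm) * T" unfolding T_def K_def Um_def Bsv_def
    by (simp add: asc mult_nn GmHm_c)
  have T0: "T $$ (k,d-i) = 0" if k: "k < i" for k
  proof -
    have kd: "k \<le> d" using k i by auto
    have "T $$ (k,d-i) = ths k * K $$ (k,d-i) + (if k < d then phiG (k+1) * K $$ (k+1,d-i) else 0)"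
      unfolding T_def Um_eq[OF lg] using ub_left[OF cK kd, of "d-i"] by simp
    moreover have "K $$ (k,d-i) = 0" using K(1)[of "d-i" k] k i unfolding K_def by auto
    moreover have "phiG (k+1) * K $$ (k+1,d-i) = 0"
    proof (cases "k + 1 = i")
      case True then show ?thesis using z by simp
    next
      case False then have "k + 1 < d - (d - i)" using k i by auto
      then show ?thesis using K(1)[of "d-i" "k+1"] unfolding K_def by auto
    qed
    ultimately show ?thesis by auto
  qed
  have "Bsv $$ (d-i+1,d-i) = (\<Sum>k<Suc d. (Qv * Gm) $$ (d-i+1,k) * T $$ (k,d-i))"
    unfolding BT by (rule mult_entry[OF _ cT]) (use i in \<open>auto intro: mult_nn\<close>)
  also have "\<dots> = 0"
  proof (rule zero_sum, intro allI impI)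
    fix k assume k: "k < Suc d"
    show "(Qv * Gm) $$ (d-i+1,k) * T $$ (k,d-i) = 0"
    proof (cases "k < i")
      case True then show ?thesis using T0 by auto
    next
      case False then show ?thesis using QvG[of "d-i+1" k] k i by auto
    qed
  qed
  finally have "Bsv $$ (d-i+1,d-i) = 0" .
  moreover have "Bsv $$ (d-i+1,d-i) \<noteq> 0" using lg i unfolding lower_good_def by auto
  ultimately show False by simp
qed

lemma G_exists: assumes lg: lower_good
  shows "\<exists>G H phi. similar_mat_wit LA LA' G H \<and> similar_mat_wit LAs (upper_bidiag d ths phi) G H \<and>
           (\<forall>i\<in>{1..d}. phi i \<noteq> 0)"
proof (intro exI conjI)
  show "similar_mat_wit LA LA' Gm Hm" by (rule sim_G)
  show "\<forall>i\<in>{1..d}. phiG i \<noteq> 0" by (rule phiG_nz[OF lg])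
  show "similar_mat_wit LAs (upper_bidiag d ths phiG) Gm Hm"
  proof (rule sim_intro[of _ "Suc d"])
    have "Gm * Um * Hm = LAs" unfolding Um_def using Hm by (simp add: asc mult_nn GmHm_c)
    then show "LAs = Gm * upper_bidiag d ths phiG * Hm" using Um_eq[OF lg] by simp
  qed (use Hm in auto)
qed

end


context lpset begin

lemma split_from_G:
  assumes sG: "similar_mat_wit LA LA' G H" and sU: "similar_mat_wit LAs (upper_bidiag d ths phi) G H"
    and phinz: "\<forall>i\<in>{1..d}. phi i \<noteq> 0"
  shows "split_sequence d LA LAs (\<lambda>i. th (d - i)) ths phi"
proof -
  note u = sim_unpack[OF sG lower_bidiag_carrier]
  have cG: "G \<in> carrier_mat (Suc d) (Suc d)" and cH: "H \<in> carrier_mat (Suc d) (Suc d)" using u by auto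
  have dG: "dim_row G = Suc d" "dim_col G = Suc d" using cG by auto
  have AG: "LA * G = G * LA'" using sim_left(2)[OF sG lower_bidiag_carrier] .
  have AsG: "LAs * G = G * upper_bidiag d ths phi" using sim_left(2)[OF sU upper_bidiag_carrier] .
  define g where "g i = col G i" for i
  define V where "V i = {c \<cdot>\<^sub>v g i | c. True}" for i
  have cg: "g i \<in> carrier_vec (Suc d)" if "i \<le> d" for i unfolding g_def using cG that by (intro col_carrier_vec) auto
  have cM1: "LA - c \<cdot>\<^sub>m 1\<^sub>m (Suc d) \<in> carrier_mat (Suc d) (Suc d)" for c by auto
  have cM2: "LAs - c \<cdot>\<^sub>m 1\<^sub>m (Suc d) \<in> carrier_mat (Suc d) (Suc d)" for c by auto
  have A1: "(LA - th (d - i) \<cdot>\<^sub>m 1\<^sub>m (Suc d)) *\<^sub>v g i = g (i+1)" if i: "i < d" for i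
  proof (rule eq_vecI)
    fix m assume "m < dim_vec (g (i+1))"
    then have m: "m < Suc d" unfolding g_def using dG by simp
    have "((LA - th (d - i) \<cdot>\<^sub>m 1\<^sub>m (Suc d)) *\<^sub>v g i) $ m = (G * LA') $$ (m,i) - th (d - i) * G $$ (m,i)"
      unfolding g_def by (rule shift_col[OF lower_bidiag_carrier cG lower_bidiag_carrier AG]) (use i m in auto)
    also have "\<dots> = G $$ (m,i+1)" using lb_right[OF cG m, of i] i by simp
    finally show "((LA - th (d - i) \<cdot>\<^sub>m 1\<^sub>m (Suc d)) *\<^sub>v g i) $ m = g (i+1) $ m"
      unfolding g_def using m i dG by simp
  qed (use dG in \<open>simp add: g_def\<close>)
  have A2: "(LA - th (d - d) \<cdot>\<^sub>m 1\<^sub>m (Suc d)) *\<^sub>v g d = 0\<^sub>v (Suc d)"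
  proof (rule eq_vecI)
    fix m assume "m < dim_vec (0\<^sub>v (Suc d) :: 'a vec)"
    then have m: "m < Suc d" by simp
    have "((LA - th (d - d) \<cdot>\<^sub>m 1\<^sub>m (Suc d)) *\<^sub>v g d) $ m = (G * LA') $$ (m,d) - th (d - d) * G $$ (m,d)"
      unfolding g_def by (rule shift_col[OF lower_bidiag_carrier cG lower_bidiag_carrier AG]) (use m in auto)
    also have "\<dots> = 0" using lb_right[OF cG m, of d] by simp
    finally show "((LA - th (d - d) \<cdot>\<^sub>m 1\<^sub>m (Suc d)) *\<^sub>v g d) $ m = 0\<^sub>v (Suc d) $ m" using m by simp
  qed simp
  have S1: "(LAs - ths i \<cdot>\<^sub>m 1\<^sub>m (Suc d)) *\<^sub>v g i = phi i \<cdot>\<^sub>v g (i-1)" if i: "1 \<le> i" "i \<le> d" for i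
  proof (rule eq_vecI)
    fix m assume "m < dim_vec (phi i \<cdot>\<^sub>v g (i-1))"
    then have m: "m < Suc d" unfolding g_def using dG by simp
    have "((LAs - ths i \<cdot>\<^sub>m 1\<^sub>m (Suc d)) *\<^sub>v g i) $ m
        = (G * upper_bidiag d ths phi) $$ (m,i) - ths i * G $$ (m,i)"
      unfolding g_def by (rule shift_col[OF upper_bidiag_carrier cG upper_bidiag_carrier AsG]) (use i m in auto)
    also have "\<dots> = phi i * G $$ (m,i-1)" using ub_right[OF cG m, of i] i by simp
    finally show "((LAs - ths i \<cdot>\<^sub>m 1\<^sub>m (Suc d)) *\<^sub>v g i) $ m = (phi i \<cdot>\<^sub>v g (i-1)) $ m"
      unfolding g_def using m i dG by simp
  qed (use dG i in \<open>simp add: g_def\<close>)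
  have S2: "(LAs - ths 0 \<cdot>\<^sub>m 1\<^sub>m (Suc d)) *\<^sub>v g 0 = 0\<^sub>v (Suc d)"
  proof (rule eq_vecI)
    fix m assume "m < dim_vec (0\<^sub>v (Suc d) :: 'a vec)"
    then have m: "m < Suc d" by simp
    have "((LAs - ths 0 \<cdot>\<^sub>m 1\<^sub>m (Suc d)) *\<^sub>v g 0) $ m
        = (G * upper_bidiag d ths phi) $$ (m,0) - ths 0 * G $$ (m,0)"
      unfolding g_def by (rule shift_col[OF upper_bidiag_carrier cG upper_bidiag_carrier AsG]) (use m in auto)
    also have "\<dots> = 0" using ub_right[OF cG m, of 0] by simp
    finally show "((LAs - ths 0 \<cdot>\<^sub>m 1\<^sub>m (Suc d)) *\<^sub>v g 0) $ m = 0\<^sub>v (Suc d) $ m" using m by simp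
  qed simp
  have gnz: "g i \<noteq> 0\<^sub>v (Suc d)" if i: "i \<le> d" for i
  proof
    assume z: "g i = 0\<^sub>v (Suc d)"
    have "(H * G) $$ (i,i) = (\<Sum>l<Suc d. H $$ (i,l) * G $$ (l,i))"
      by (rule mult_entry[OF cH cG]) (use i in auto)
    also have "\<dots> = 0"
    proof (rule zero_sum, intro allI impI)
      fix l assume l: "l < Suc d"
      have "G $$ (l,i) = g i $ l" unfolding g_def using l i dG by simp
      then show "H $$ (i,l) * G $$ (l,i) = 0" using z l by simp
    qed
    finally show False using u(5) i by simp
  qed
  have GHx: "G *\<^sub>v (H *\<^sub>v x) = x" if "x \<in> carrier_vec (Suc d)" for x
  proof -
    have "G *\<^sub>v (H *\<^sub>v x) = (G * H) *\<^sub>v x" using cG cH that by simp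
    then show ?thesis using u(4) that by simp
  qed
  have HGx: "H *\<^sub>v (G *\<^sub>v x) = x" if "x \<in> carrier_vec (Suc d)" for x
  proof -
    have "H *\<^sub>v (G *\<^sub>v x) = (H * G) *\<^sub>v x" using cG cH that by simp
    then show ?thesis using u(5) that by simp
  qed
  have Gv: "(G *\<^sub>v vec (Suc d) c) $ k = (\<Sum>i\<le>d. c i * G $$ (k,i))" if k: "k < Suc d" for c k
  proof -
    have "(G *\<^sub>v vec (Suc d) c) $ k = (\<Sum>i<Suc d. G $$ (k,i) * c i)"
      using k dG by (simp add: scalar_prod_def lessThan_atLeast0)
    also have "\<dots> = (\<Sum>i\<le>d. c i * G $$ (k,i))" by (simp add: lessThan_Suc_atMost mult.commute)
    finally show ?thesis .
  qed
  have dec: "decomposition d V"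
    unfolding decomposition_def
  proof (intro conjI allI impI ballI)
    fix i assume "i \<le> d"
    then show "\<exists>v. v \<in> carrier_vec (Suc d) \<and> v \<noteq> 0\<^sub>v (Suc d) \<and> V i = {c \<cdot>\<^sub>v v | c. True}"
      using cg gnz unfolding V_def by blast
  next
    fix x :: "'a vec" assume x: "x \<in> carrier_vec (Suc d)"
    define y where "y = H *\<^sub>v x"
    have cy: "y \<in> carrier_vec (Suc d)" unfolding y_def using cH x by (intro mult_mat_vec_carrier)
    define P where "P u \<longleftrightarrow> (\<forall>i\<le>d. u i \<in> V i) \<and> (\<forall>i>d. u i = 0\<^sub>v (Suc d)) \<and>
        x = vec (Suc d) (\<lambda>k. \<Sum>i\<le>d. u i $ k)" for u
    define u0 where "u0 i = (if i \<le> d then (y $ i) \<cdot>\<^sub>v g i else 0\<^sub>v (Suc d))" for i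
    have xsum: "x = vec (Suc d) (\<lambda>k. \<Sum>i\<le>d. c i * G $$ (k,i))" if xc: "x = G *\<^sub>v vec (Suc d) c" for c
      by (rule eq_vecI) (use xc Gv x dG in auto)
    have ysum: "x = G *\<^sub>v vec (Suc d) (\<lambda>i. y $ i)"
    proof -
      have "vec (Suc d) (\<lambda>i. y $ i) = y" using cy by auto
      then show ?thesis using GHx[OF x] unfolding y_def by simp
    qed
    have Pu0: "P u0" unfolding P_def
    proof (intro conjI allI impI)
      fix i assume "i \<le> d" then show "u0 i \<in> V i" unfolding u0_def V_def by auto
    next
      fix i assume "d < i" then show "u0 i = 0\<^sub>v (Suc d)" unfolding u0_def by auto
    next
      have "x = vec (Suc d) (\<lambda>k. \<Sum>i\<le>d. y $ i * G $$ (k,i))" by (rule xsum[OF ysum])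
      also have "\<dots> = vec (Suc d) (\<lambda>k. \<Sum>i\<le>d. u0 i $ k)"
        by (rule eq_vecI) (auto simp: u0_def g_def dG intro!: sum.cong)
      finally show "x = vec (Suc d) (\<lambda>k. \<Sum>i\<le>d. u0 i $ k)" .
    qed
    have uniq: "u = u0" if Pu: "P u" for u
    proof -
      have "\<forall>i. \<exists>c. i \<le> d \<longrightarrow> u i = c \<cdot>\<^sub>v g i" using Pu unfolding P_def V_def by blast
      then obtain c where c: "\<forall>i\<le>d. u i = c i \<cdot>\<^sub>v g i" by metis
      have "x = vec (Suc d) (\<lambda>k. \<Sum>i\<le>d. u i $ k)" using Pu unfolding P_def by auto
      also have "\<dots> = vec (Suc d) (\<lambda>k. \<Sum>i\<le>d. c i * G $$ (k,i))"
        by (rule eq_vecI) (auto simp: c g_def dG intro!: sum.cong)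
      also have "\<dots> = G *\<^sub>v vec (Suc d) c"
      proof (rule eq_vecI)
        fix k assume "k < dim_vec (G *\<^sub>v vec (Suc d) c)"
        then have k: "k < Suc d" using dG by simp
        show "vec (Suc d) (\<lambda>k. \<Sum>i\<le>d. c i * G $$ (k,i)) $ k = (G *\<^sub>v vec (Suc d) c) $ k"
          using Gv[OF k, of c] k by simp
      qed (use dG in simp)
      finally have "y = vec (Suc d) c" unfolding y_def using HGx[of "vec (Suc d) c"] by auto
      then have "\<forall>i\<le>d. y $ i = c i" by auto
      then show "u = u0" using c Pu unfolding P_def u0_def by (auto intro!: ext)
    qed
    show "\<exists>!u. (\<forall>i\<le>d. u i \<in> V i) \<and> (\<forall>i>d. u i = 0\<^sub>v (Suc d)) \<and> x = vec (Suc d) (\<lambda>k. \<Sum>i\<le>d. u i $ k)"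
      using Pu0 uniq unfolding P_def by blast
  qed
  have sd: "split_decomposition d LA LAs (\<lambda>i. th (d - i)) ths V"
    unfolding split_decomposition_def
  proof (intro conjI ballI allI impI)
    show "decomposition d V" by (rule dec)
  next
    fix i assume i: "i < d"
    show "(\<lambda>v. (LA - th (d - i) \<cdot>\<^sub>m 1\<^sub>m (Suc d)) *\<^sub>v v) ` V i = V (i + 1)"
      unfolding V_def by (rule img1[where a=1 and n="Suc d"]) (use A1[OF i] i cg in auto)
  next
    show "(\<lambda>v. (LA - th (d - d) \<cdot>\<^sub>m 1\<^sub>m (Suc d)) *\<^sub>v v) ` V d = {0\<^sub>v (Suc d)}"
      unfolding V_def by (rule img0[where n="Suc d"]) (use A2 cg in auto)
  next
    fix i assume i: "i \<in> {1..d}"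
    show "(\<lambda>v. (LAs - ths i \<cdot>\<^sub>m 1\<^sub>m (Suc d)) *\<^sub>v v) ` V i = V (i - 1)"
      unfolding V_def by (rule img1[where a="phi i" and n="Suc d"]) (use S1 i phinz cg in auto)
  next
    show "(\<lambda>v. (LAs - ths 0 \<cdot>\<^sub>m 1\<^sub>m (Suc d)) *\<^sub>v v) ` V 0 = {0\<^sub>v (Suc d)}"
      unfolding V_def by (rule img0[where n="Suc d"]) (use S2 cg in auto)
  qed
  have eig: "((LA - th (d - (i-1)) \<cdot>\<^sub>m 1\<^sub>m (Suc d)) * (LAs - ths i \<cdot>\<^sub>m 1\<^sub>m (Suc d))) *\<^sub>v v = phi i \<cdot>\<^sub>v v"
    if i: "i \<in> {1..d}" and v: "v \<in> V i" for i v
  proof -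
    obtain c where vc: "v = c \<cdot>\<^sub>v g i" using v unfolding V_def by auto
    have i1: "i - 1 < d" "i - 1 + 1 = i" using i by auto
    have cgi: "g i \<in> carrier_vec (Suc d)" "g (i-1) \<in> carrier_vec (Suc d)" using i cg by auto
    have "((LA - th (d - (i-1)) \<cdot>\<^sub>m 1\<^sub>m (Suc d)) * (LAs - ths i \<cdot>\<^sub>m 1\<^sub>m (Suc d))) *\<^sub>v v
        = (LA - th (d - (i-1)) \<cdot>\<^sub>m 1\<^sub>m (Suc d)) *\<^sub>v ((LAs - ths i \<cdot>\<^sub>m 1\<^sub>m (Suc d)) *\<^sub>v v)"
      using vc cgi by (simp add: assoc_mult_mat_vec[OF cM1 cM2])
    also have "(LAs - ths i \<cdot>\<^sub>m 1\<^sub>m (Suc d)) *\<^sub>v v = (c * phi i) \<cdot>\<^sub>v g (i-1)"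
      using vc mult_mat_vec[OF cM2 cgi(1)] S1 i by (simp add: smult_smult_assoc)
    also have "(LA - th (d - (i-1)) \<cdot>\<^sub>m 1\<^sub>m (Suc d)) *\<^sub>v ((c * phi i) \<cdot>\<^sub>v g (i-1)) = (c * phi i) \<cdot>\<^sub>v g i"
      using mult_mat_vec[OF cM1 cgi(2)] A1[OF i1(1)] i1(2) by simp
    also have "\<dots> = phi i \<cdot>\<^sub>v v" using vc by (simp add: smult_smult_assoc mult.commute)
    finally show ?thesis .
  qed
  show ?thesis unfolding split_sequence_def using sd eig by blast
qed

end


theorem theorem6p3:
  fixes d :: nat and th ths ph :: "nat \<Rightarrow> 'a::field"
  assumes th_dist: "\<forall>i \<le> d. \<forall>j \<le> d. i \<noteq> j \<longrightarrow> th i \<noteq> th j"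
    and ths_dist: "\<forall>i \<le> d. \<forall>j \<le> d. i \<noteq> j \<longrightarrow> ths i \<noteq> ths j"
    and ph_nz: "\<forall>i \<in> {1..d}. ph i \<noteq> 0"
  defines "A \<equiv> lower_bidiag d th"
    and "As \<equiv> upper_bidiag d ths ph"
  shows "(leonard_pair A As \<longleftrightarrow>
           (\<exists>G H phi. similar_mat_wit A (lower_bidiag d (\<lambda>i. th (d - i))) G H \<and>
                      similar_mat_wit As (upper_bidiag d ths phi) G H \<and>
                      (\<forall>i \<in> {1..d}. phi i \<noteq> 0)))
       \<and> (\<forall>G H phi. leonard_pair A As \<longrightarrow>
              similar_mat_wit A (lower_bidiag d (\<lambda>i. th (d - i))) G H \<longrightarrow>
              similar_mat_wit As (upper_bidiag d ths phi) G H \<longrightarrow>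
              (\<forall>i \<in> {1..d}. phi i \<noteq> 0) \<longrightarrow>
              split_sequence d A As (\<lambda>i. th (d - i)) ths phi)"
proof -
  interpret L: lpset d th ths ph using th_dist ths_dist ph_nz by unfold_locales
  have fwd: "\<exists>G H phi. similar_mat_wit A (lower_bidiag d (\<lambda>i. th (d - i))) G H \<and>
                      similar_mat_wit As (upper_bidiag d ths phi) G H \<and> (\<forall>i \<in> {1..d}. phi i \<noteq> 0)"
    if lp: "leonard_pair A As"
  proof -
    obtain B Bs P Q where s1: "similar_mat_wit A B P Q" and s2: "similar_mat_wit As Bs P Q"
      and dB: "diagonal_mat B" and irr: "irred_tridiagonal Bs"
      using lp unfolding leonard_pair_def by blast
    note u1 = sim_unpack[OF s1, unfolded A_def, OF lower_bidiag_carrier]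
    note u2 = sim_unpack[OF s2, unfolded As_def, OF upper_bidiag_carrier]
    have Bdiag: "\<forall>i<Suc d. \<forall>j<Suc d. i \<noteq> j \<longrightarrow> B $$ (i,j) = 0"
      using dB u1(1) unfolding diagonal_mat_def by auto
    obtain S where S: "S \<in> carrier_mat (Suc d) (Suc d)" "det S \<noteq> 0" "S * A = transpose_mat A * S"
      "S * As = transpose_mat As * S"
      using form_exists[OF lower_bidiag_carrier upper_bidiag_carrier u1(1) u2(1) u1(2,3,4,5,6) u2(6) Bdiag irr]
      unfolding A_def As_def by blast
    have "L.lower_good" by (rule L.lower_good_from_form[OF S(1,2)]) (use S in \<open>simp_all add: A_def As_def\<close>)
    from L.G_exists[OF this] show ?thesis unfolding A_def As_def .
  qed
  have bwd: "leonard_pair A As"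
    if ex: "\<exists>G H phi. similar_mat_wit A (lower_bidiag d (\<lambda>i. th (d - i))) G H \<and>
                      similar_mat_wit As (upper_bidiag d ths phi) G H \<and> (\<forall>i \<in> {1..d}. phi i \<noteq> 0)"
  proof -
    obtain G H phi where "similar_mat_wit A (lower_bidiag d (\<lambda>i. th (d - i))) G H"
      "similar_mat_wit As (upper_bidiag d ths phi) G H" "\<forall>i \<in> {1..d}. phi i \<noteq> 0"
      using ex by blast
    then have "L.lower_good" using L.lower_from_G unfolding A_def As_def by blast
    then show ?thesis using L.LP_from_lower_good unfolding A_def As_def by blast
  qed
  have spl: "split_sequence d A As (\<lambda>i. th (d - i)) ths phi"
    if "similar_mat_wit A (lower_bidiag d (\<lambda>i. th (d - i))) G H"
      "similar_mat_wit As (upper_bidiag d ths phi) G H" "\<forall>i \<in> {1..d}. phi i \<noteq> 0" for G H phi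
    using L.split_from_G that unfolding A_def As_def by blast
  show ?thesis using fwd bwd spl by blast
qed

end
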